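(* There is no edge-to-edge tiling of the sphere by $f=12$ congruent $a^4b$-pentagons with angles $(\alpha,\beta,\gamma,\delta,\epsilon)=(\pi,\tfrac23\pi,\tfrac12\pi,\tfrac12\pi,\tfrac23\pi)$.
   Context: An $a^4b$-pentagon is a spherical pentagon with four edges of length $a$ and one edge of length $b\neq a$; $\alpha$ is the vertex opposite the $b$-edge, $\beta,\gamma$ are adjacent to $\alpha$, $\delta$ is the endpoint of the $b$-edge adjacent to $\beta$ and $\epsilon$ the endpoint of the $b$-edge adjacent to $\gamma$. Tiles are congruent copies, mirror images allowed. *)

theory Defs
  imports "HOL-Analysis.Analysis"
begin

definition sarc :: "real^3 \<Rightarrow> real^3 \<Rightarrow> (real^3) set" where
  "sarc p q = (\<lambda>t. (let x = (1 - t) *\<^sub>R p + t *\<^sub>R q in x /\<^sub>R norm x)) ` {0..1}"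

definition poly_edge :: "(real^3) list \<Rightarrow> nat \<Rightarrow> (real^3) set" where
  "poly_edge vs k = sarc (vs ! k) (vs ! (Suc k mod length vs))"

definition poly_curve :: "(real^3) list \<Rightarrow> (real^3) set" where
  "poly_curve vs = (\<Union>k<length vs. poly_edge vs k)"

text \<open>T is a (closed) spherical polygon with vertices vs in cyclic order: the boundary
  is a simple closed curve made of minor great arcs, and T is the closure of one of the
  complementary regions (a component of the complement together with the curve).\<close>
definition spherical_polygon :: "(real^3) set \<Rightarrow> (real^3) list \<Rightarrow> bool" where
  "spherical_polygon T vs \<longleftrightarrow>
     (let n = length vs; K = poly_curve vs in
       3 \<le> n \<and> set vs \<subseteq> sphere 0 1 \<and> distinct vs \<and>
       (\<forall>k<n. vs ! (Suc k mod n) \<noteq> - (vs ! k)) \<and>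
       (\<forall>k<n. \<forall>l<n. k \<noteq> l \<longrightarrow>
          poly_edge vs k \<inter> poly_edge vs l \<subseteq>
            {vs ! k, vs ! (Suc k mod n)} \<inter> {vs ! l, vs ! (Suc l mod n)}) \<and>
       (\<exists>x \<in> sphere 0 1 - K. T = connected_component_set (sphere 0 1 - K) x \<union> K))"

definition sdist :: "real^3 \<Rightarrow> real^3 \<Rightarrow> real" where
  "sdist p q = arccos (p \<bullet> q)"

definition tangent_dir :: "real^3 \<Rightarrow> real^3 \<Rightarrow> real^3" where
  "tangent_dir v u = (let x = u - (v \<bullet> u) *\<^sub>R v in x /\<^sub>R norm x)"

text \<open>The interior angle of the region T at the vertex v, whose neighbouring vertices
  are u and w, equals \<theta>: rotating the tangent direction towards u by \<theta> (in one of the two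
  orientations of the tangent plane) gives the tangent direction towards w, and locally near v
  the region T is exactly the sector swept by this rotation.\<close>
definition interior_angle :: "(real^3) set \<Rightarrow> real^3 \<Rightarrow> real^3 \<Rightarrow> real^3 \<Rightarrow> real \<Rightarrow> bool" where
  "interior_angle T u v w \<theta> \<longleftrightarrow>
     0 < \<theta> \<and> \<theta> < 2 * pi \<and>
     (\<exists>\<sigma> \<in> {-1, 1::real}.
        let n1 = tangent_dir v u;
            n2 = \<sigma> *\<^sub>R cross3 v n1;
            dir = (\<lambda>\<phi>. cos \<phi> *\<^sub>R n1 + sin \<phi> *\<^sub>R n2)
        in tangent_dir v w = dir \<theta> \<and>
           (\<exists>\<epsilon>>0. \<forall>r. 0 < r \<and> r < \<epsilon> \<longrightarrow>
               (\<forall>\<phi>. 0 < \<phi> \<and> \<phi> < 2 * pi \<and> \<phi> \<noteq> \<theta> \<longrightarrow>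
                  (cos r *\<^sub>R v + sin r *\<^sub>R dir \<phi> \<in> T \<longleftrightarrow> \<phi> < \<theta>))))"

text \<open>a^4b-pentagon with vertices alpha=A, beta=B, gamma=C, delta=D, epsilon=E
  (cyclic order A,B,D,E,C), edge lengths AB=BD=EC=CA=a, DE=b with b \<noteq> a,
  and prescribed interior angles.\<close>
definition a4b_pentagon :: "(real^3) set \<Rightarrow> real^3 \<Rightarrow> real^3 \<Rightarrow> real^3 \<Rightarrow> real^3 \<Rightarrow> real^3
     \<Rightarrow> real \<Rightarrow> real \<Rightarrow> real \<Rightarrow> real \<Rightarrow> real \<Rightarrow> real \<Rightarrow> real \<Rightarrow> bool" where
  "a4b_pentagon T A B C D E a b al be ga de ep \<longleftrightarrow>
     spherical_polygon T [A, B, D, E, C] \<and>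
     sdist A B = a \<and> sdist B D = a \<and> sdist D E = b \<and> sdist E C = a \<and> sdist C A = a \<and>
     b \<noteq> a \<and>
     interior_angle T C A B al \<and>
     interior_angle T A B D be \<and>
     interior_angle T B D E de \<and>
     interior_angle T D E C ep \<and>
     interior_angle T E C A ga"

definition edge_to_edge_tiling :: "nat \<Rightarrow> (nat \<Rightarrow> (real^3) set) \<Rightarrow> (nat \<Rightarrow> (real^3) list) \<Rightarrow> bool" where
  "edge_to_edge_tiling f P V \<longleftrightarrow>
     (\<forall>i<f. spherical_polygon (P i) (V i)) \<and>
     (\<Union>i<f. P i) = sphere 0 1 \<and>
     (\<forall>i<f. \<forall>j<f. i \<noteq> j \<longrightarrow> P i \<inter> P j \<subseteq> poly_curve (V i)) \<and>
     (\<forall>i<f. \<forall>k<length (V i). \<exists>j<f. j \<noteq> i \<and>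
         (\<exists>l<length (V j). poly_edge (V i) k = poly_edge (V j) l)) \<and>
     (\<forall>i<f. \<forall>j<f. \<forall>k<length (V i). \<forall>v \<in> set (V j).
         v \<in> poly_edge (V i) k \<longrightarrow> v = V i ! k \<or> v = V i ! (Suc k mod length (V i))) \<and>
     (\<forall>i<f. \<forall>v \<in> set (V i). 3 \<le> card {j. j < f \<and> v \<in> set (V j)})"

end

theory Submission
  imports Defs
begin


lemma ot_td:
  assumes g: "orthogonal_transformation g"
  shows "tangent_dir (g v) (g u) = g (tangent_dir v u)"
proof -
  have lin: "linear g" using g orthogonal_transformation_linear by blast
  have ip: "g v \<bullet> g u = v \<bullet> u" using g unfolding orthogonal_transformation_def by blast
  have "g u - (g v \<bullet> g u) *\<^sub>R g v = g (u - (v \<bullet> u) *\<^sub>R v)"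
    by (simp add: ip linear_diff[OF lin] linear_scale[OF lin])
  moreover have "norm (g x) = norm x" for x using g orthogonal_transformation by blast
  ultimately show ?thesis unfolding tangent_dir_def Let_def
    by (simp add: linear_scale[OF lin])
qed

lemma ot_sdist:
  assumes g: "orthogonal_transformation g"
  shows "sdist (g p) (g q) = sdist p q"
  using g unfolding sdist_def orthogonal_transformation_def by simp

lemma ot_ia:
  assumes g: "orthogonal_transformation g" and ia: "interior_angle T u v w th"
  shows "interior_angle (g ` T) (g u) (g v) (g w) th"
proof -
  have lin: "linear g" using g orthogonal_transformation_linear by blast
  have inj: "inj g" using g orthogonal_transformation_inj by blast
  define d where "d = det (matrix g)"
  have d1: "d = 1 \<or> d = -1" using orthogonal_transformation_det[OF g] unfolding d_def
    by linarith
  have d2: "d * d = 1" using d1 by auto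
  have cr: "cross3 (g x) (g y) = d *\<^sub>R g (cross3 x y)" for x y
    unfolding d_def by (rule cross_orthogonal_transformation[OF g])
  from ia obtain s where s: "s \<in> {-1, 1::real}" and th: "0 < th" "th < 2*pi" and
    main: "let n1 = tangent_dir v u;
            n2 = s *\<^sub>R cross3 v n1;
            dir = (\<lambda>\<phi>. cos \<phi> *\<^sub>R n1 + sin \<phi> *\<^sub>R n2)
        in tangent_dir v w = dir th \<and>
           (\<exists>e>0. \<forall>r. 0 < r \<and> r < e \<longrightarrow>
               (\<forall>\<phi>. 0 < \<phi> \<and> \<phi> < 2 * pi \<and> \<phi> \<noteq> th \<longrightarrow>
                  (cos r *\<^sub>R v + sin r *\<^sub>R dir \<phi> \<in> T \<longleftrightarrow> \<phi> < th)))"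
    unfolding interior_angle_def by blast
  define n1 where "n1 = tangent_dir v u"
  define n2 where "n2 = s *\<^sub>R cross3 v n1"
  define dir where "dir = (\<lambda>\<phi>. cos \<phi> *\<^sub>R n1 + sin \<phi> *\<^sub>R n2)"
  have m1: "tangent_dir v w = dir th" and
    m2: "\<exists>e>0. \<forall>r. 0 < r \<and> r < e \<longrightarrow>
               (\<forall>\<phi>. 0 < \<phi> \<and> \<phi> < 2 * pi \<and> \<phi> \<noteq> th \<longrightarrow>
                  (cos r *\<^sub>R v + sin r *\<^sub>R dir \<phi> \<in> T \<longleftrightarrow> \<phi> < th))"
    using main unfolding n1_def n2_def dir_def Let_def by auto
  define s' where "s' = d * s"
  have s': "s' \<in> {-1, 1::real}" using s d1 unfolding s'_def by auto
  have n1': "tangent_dir (g v) (g u) = g n1" unfolding n1_def by (rule ot_td[OF g])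
  have n2': "s' *\<^sub>R cross3 (g v) (g n1) = g n2"
    unfolding n2_def s'_def cr using d2 by (simp add: linear_scale[OF lin] algebra_simps)
  have dir': "cos \<phi> *\<^sub>R g n1 + sin \<phi> *\<^sub>R g n2 = g (dir \<phi>)" for \<phi>
    unfolding dir_def by (simp add: linear_add[OF lin] linear_scale[OF lin])
  have pt': "cos r *\<^sub>R g v + sin r *\<^sub>R g (dir \<phi>) = g (cos r *\<^sub>R v + sin r *\<^sub>R dir \<phi>)" for r \<phi>
    by (simp add: linear_add[OF lin] linear_scale[OF lin])
  have mem: "g x \<in> g ` T \<longleftrightarrow> x \<in> T" for x using inj by (simp add: inj_image_mem_iff)
  show ?thesis
    unfolding interior_angle_def Let_def
  proof (intro conjI th bexI[OF _ s'])
    show "tangent_dir (g v) (g w) = cos th *\<^sub>R tangent_dir (g v) (g u) + sin th *\<^sub>R s' *\<^sub>R cross3 (g v) (tangent_dir (g v) (g u))"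
      unfolding n1' n2' dir' ot_td[OF g, of v w] m1 ..
    from m2 obtain e where e: "e > 0" and eh: "\<forall>r. 0 < r \<and> r < e \<longrightarrow>
               (\<forall>\<phi>. 0 < \<phi> \<and> \<phi> < 2 * pi \<and> \<phi> \<noteq> th \<longrightarrow>
                  (cos r *\<^sub>R v + sin r *\<^sub>R dir \<phi> \<in> T \<longleftrightarrow> \<phi> < th))" by blast
    show "\<exists>e>0. \<forall>r. 0 < r \<and> r < e \<longrightarrow>
        (\<forall>\<phi>. 0 < \<phi> \<and> \<phi> < 2 * pi \<and> \<phi> \<noteq> th \<longrightarrow>
              (cos r *\<^sub>R g v + sin r *\<^sub>R (cos \<phi> *\<^sub>R tangent_dir (g v) (g u) + sin \<phi> *\<^sub>R s' *\<^sub>R cross3 (g v) (tangent_dir (g v) (g u))) \<in> g ` T) = (\<phi> < th))"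
      unfolding n1' n2' dir' pt' mem using e eh by blast
  qed
qed



lemma unit_eq1: fixes p q :: "real^3"
  assumes "norm p = 1" "norm q = 1" "p \<bullet> q = 1" shows "p = q"
proof -
  have "norm (p - q) ^ 2 = norm p ^ 2 + norm q ^ 2 - 2 * (p \<bullet> q)"
    by (simp add: power2_norm_eq_inner inner_diff algebra_simps inner_commute)
  then have "norm (p - q) = 0" using assms by simp
  then show ?thesis by simp
qed

lemma unit_eqm1: fixes p q :: "real^3"
  assumes "norm p = 1" "norm q = 1" "p \<bullet> q = -1" shows "q = - p"
proof -
  have "norm (p + q) ^ 2 = norm p ^ 2 + norm q ^ 2 + 2 * (p \<bullet> q)"
    by (simp add: power2_norm_eq_inner inner_add algebra_simps inner_commute)
  then have "norm (p + q) = 0" using assms by simp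
  then show ?thesis by (simp add: add_eq_0_iff2)
qed

lemma cross_nz: fixes p q :: "real^3"
  assumes "norm p = 1" "norm q = 1" "p \<noteq> q" "q \<noteq> - p"
  shows "cross3 p q \<noteq> 0"
proof
  assume "cross3 p q = 0"
  then have "(p \<bullet> q)^2 = 1" using norm_cross[of p q] assms by simp
  then have "p \<bullet> q = 1 \<or> p \<bullet> q = -1" by (simp add: power2_eq_1_iff)
  then show False using unit_eq1 unit_eqm1 assms by blast
qed

lemma td_props: fixes u v :: "real^3"
  assumes "norm v = 1" "norm u = 1" "u \<noteq> v" "u \<noteq> - v"
  shows "norm (tangent_dir v u) = 1" "v \<bullet> tangent_dir v u = 0"
proof -
  define x where "x = u - (v \<bullet> u) *\<^sub>R v"
  have vv: "v \<bullet> v = 1" using assms(1) by (simp add: norm_eq_1)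
  have vx: "v \<bullet> x = 0" unfolding x_def by (simp add: inner_diff_right vv)
  have "x \<noteq> 0"
  proof
    assume "x = 0"
    then have u: "u = (v \<bullet> u) *\<^sub>R v" unfolding x_def by simp
    then have "norm u = \<bar>v \<bullet> u\<bar>" using assms(1) by (metis norm_scaleR mult_1_right)
    then have "v \<bullet> u = 1 \<or> v \<bullet> u = -1" using assms(2) by linarith
    then show False using u assms(3,4) by auto
  qed
  then have nx: "norm x \<noteq> 0" by simp
  have td: "tangent_dir v u = x /\<^sub>R norm x" unfolding tangent_dir_def x_def Let_def by simp
  show "norm (tangent_dir v u) = 1" unfolding td using nx by simp
  show "v \<bullet> tangent_dir v u = 0" unfolding td by (simp add: vx)
qed

lemma ncu: fixes v e1 :: "real^3"
  assumes "norm v = 1" "norm e1 = 1" "v \<bullet> e1 = 0" shows "norm (cross3 v e1) = 1"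
proof -
  have h: "(norm (cross3 v e1))^2 = 1" using norm_cross[of v e1] assms by simp
  have "norm (cross3 v e1) = 1 \<or> norm (cross3 v e1) = -1" using h by (simp add: power2_eq_1_iff)
  then show ?thesis using norm_ge_zero[of "cross3 v e1"] by linarith
qed

definition EE :: "real^3 \<Rightarrow> real^3 \<Rightarrow> real \<Rightarrow> real^3" where
  "EE e1 e2 \<phi> = cos \<phi> *\<^sub>R e1 + sin \<phi> *\<^sub>R e2"

definition frame :: "real^3 \<Rightarrow> real^3 \<Rightarrow> real^3 \<Rightarrow> bool" where
  "frame v e1 e2 \<longleftrightarrow> norm v = 1 \<and> norm e1 = 1 \<and> v \<bullet> e1 = 0 \<and>
     (\<exists>s\<in>{-1,1::real}. e2 = s *\<^sub>R cross3 v e1)"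

lemma frame_props:
  assumes "frame v e1 e2"
  shows "norm e2 = 1" "v \<bullet> e2 = 0" "e1 \<bullet> e2 = 0" "e1 \<bullet> e1 = 1" "e2 \<bullet> e2 = 1" "v \<bullet> v = 1"
    "e2 \<bullet> v = 0" "e2 \<bullet> e1 = 0" "v \<bullet> e1 = 0" "e1 \<bullet> v = 0" "norm v = 1" "norm e1 = 1"
proof -
  obtain s where s: "s \<in> {-1,1::real}" "e2 = s *\<^sub>R cross3 v e1" using assms unfolding frame_def by blast
  have n1: "norm v = 1" "norm e1 = 1" "v \<bullet> e1 = 0" using assms unfolding frame_def by auto
  have nc: "norm (cross3 v e1) = 1" using ncu n1 by blast
  show "norm e2 = 1" using s nc by auto
  show a: "v \<bullet> e2 = 0" using s dot_cross_self by auto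
  show b: "e1 \<bullet> e2 = 0" using s dot_cross_self by auto
  show "e2 \<bullet> v = 0" using a by (simp add: inner_commute)
  show "e2 \<bullet> e1 = 0" using b by (simp add: inner_commute)
  show "v \<bullet> e1 = 0" "e1 \<bullet> v = 0" "norm v = 1" "norm e1 = 1" using n1 by (auto simp: inner_commute)
  show "e1 \<bullet> e1 = 1" using n1 by (simp add: norm_eq_1)
  show "e2 \<bullet> e2 = 1" using s nc by (auto simp: norm_eq_1)
  show "v \<bullet> v = 1" using n1 by (simp add: norm_eq_1)
qed

lemma perp_zero:
  fixes y v e1 :: "real^3"
  assumes "frame v e1 e2" "y \<bullet> v = 0" "y \<bullet> e1 = 0" "y \<bullet> e2 = 0"
  shows "y = 0"
proof -
  obtain s where s: "s \<in> {-1,1::real}" "e2 = s *\<^sub>R cross3 v e1" using assms unfolding frame_def by blast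
  have w: "y \<bullet> cross3 v e1 = 0" using assms(4) s by auto
  have "cross3 y (cross3 v e1) = 0" using Lagrange[of y v e1] assms(2,3) by (simp add: inner_commute)
  have nc: "norm (cross3 v e1) = 1" using ncu assms(1) unfolding frame_def by blast
  have "(norm (cross3 y (cross3 v e1)))\<^sup>2 + (y \<bullet> cross3 v e1)\<^sup>2 = (norm y * norm (cross3 v e1))\<^sup>2"
    by (rule norm_cross_dot)
  then have "norm y = 0" using w nc \<open>cross3 y (cross3 v e1) = 0\<close> by simp
  then show ?thesis by simp
qed

lemma frame_decomp:
  assumes "frame v e1 e2" "x \<bullet> v = 0"
  shows "x = (x \<bullet> e1) *\<^sub>R e1 + (x \<bullet> e2) *\<^sub>R e2"
proof -
  note fp = frame_props[OF assms(1)]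
  define y where "y = x - (x \<bullet> e1) *\<^sub>R e1 - (x \<bullet> e2) *\<^sub>R e2"
  have "y \<bullet> v = 0" unfolding y_def using assms(2) fp
    by (simp add: inner_diff_left)
  moreover have "y \<bullet> e1 = 0" unfolding y_def using fp
    by (simp add: inner_diff_left)
  moreover have "y \<bullet> e2 = 0" unfolding y_def using fp
    by (simp add: inner_diff_left)
  ultimately have "y = 0" using perp_zero[OF assms(1)] by blast
  then show ?thesis unfolding y_def by (simp add: algebra_simps)
qed

lemma frame_cross:
  assumes "frame v e1 e2"
  shows "\<exists>s\<in>{-1,1::real}. cross3 v e1 = s *\<^sub>R e2 \<and> cross3 v e2 = - s *\<^sub>R e1"
proof -
  obtain s where s: "s \<in> {-1,1::real}" "e2 = s *\<^sub>R cross3 v e1" using assms unfolding frame_def by blast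
  have fp: "v \<bullet> v = 1" "v \<bullet> e1 = 0" using frame_props[OF assms] by auto
  have ss: "s * s = 1" using s by auto
  have "cross3 v e1 = s *\<^sub>R e2" using s ss by auto
  moreover have "cross3 v e2 = - s *\<^sub>R e1"
    using s Lagrange[of v v e1] fp by (simp add: cross_mult_right)
  ultimately show ?thesis using s by blast
qed

lemma EE_inner: assumes "frame v e1 e2"
  shows "EE e1 e2 x \<bullet> e1 = cos x" "EE e1 e2 x \<bullet> e2 = sin x" "EE e1 e2 x \<bullet> v = 0"
  using frame_props[OF assms] unfolding EE_def
  by (auto simp: inner_add_left)

lemma EE_eq: assumes "frame v e1 e2" "EE e1 e2 x = EE e1 e2 y"
  shows "\<exists>n::int. x = y + 2 * pi * n"
proof -
  have "cos x = cos y" "sin x = sin y" using EE_inner[OF assms(1)] assms(2) by metis+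
  then show ?thesis using sin_cos_eq_iff by metis
qed

lemma EE_inj: assumes "frame v e1 e2" "EE e1 e2 x = EE e1 e2 y"
  "0 \<le> x" "x \<le> 2*pi" "0 \<le> y" "y \<le> 2*pi"
  shows "x = y \<or> (x = 0 \<and> y = 2*pi) \<or> (x = 2*pi \<and> y = 0)"
proof -
  obtain n::int where n: "x = y + 2 * pi * n" using EE_eq[OF assms(1,2)] by blast
  have "-1 \<le> n" 
  proof (rule ccontr)
    assume "\<not> -1 \<le> n" then have "real_of_int n \<le> -2" by simp
    then have "2*pi*n \<le> 2*pi*(-2)" using pi_gt_zero by (intro mult_left_mono) auto
    then show False using n assms pi_gt_zero by linarith
  qed
  moreover have "n \<le> 1"
  proof (rule ccontr)
    assume "\<not> n \<le> 1" then have "real_of_int n \<ge> 2" by simp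
    then have "2*pi*n \<ge> 2*pi*2" using pi_gt_zero by (intro mult_left_mono) auto
    then show False using n assms pi_gt_zero by linarith
  qed
  ultimately have "n = -1 \<or> n = 0 \<or> n = 1" by linarith
  then show ?thesis using n assms by auto
qed

lemma EE_periodic: "EE e1 e2 (x + 2*pi*real_of_int n) = EE e1 e2 x"
proof -
  have "sin (x + 2*pi*real_of_int n) = sin x \<and> cos (x + 2*pi*real_of_int n) = cos x"
    by (rule sin_cos_eq_iff[THEN iffD2]) blast
  then show ?thesis unfolding EE_def by simp
qed




definition pt :: "real^3 \<Rightarrow> real^3 \<Rightarrow> real^3 \<Rightarrow> real \<Rightarrow> real \<Rightarrow> real^3" where
  "pt v e1 e2 r \<phi> = cos r *\<^sub>R v + sin r *\<^sub>R EE e1 e2 \<phi>"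

definition sector :: "(real^3) set \<Rightarrow> real^3 \<Rightarrow> real^3 \<Rightarrow> real^3 \<Rightarrow> real \<Rightarrow> real \<Rightarrow> bool" where
  "sector T v e1 e2 lo th \<longleftrightarrow> (\<exists>\<epsilon>>0. \<forall>r \<phi>. 0 < r \<and> r < \<epsilon> \<and> lo < \<phi> \<and> \<phi> < lo + th \<longrightarrow> pt v e1 e2 r \<phi> \<in> T)"

lemma dir_rot:
  assumes fr: "frame v e1 e2" and n1: "norm n1 = 1" "v \<bullet> n1 = 0" and sg: "\<sigma> \<in> {-1,1::real}"
  shows "\<exists>\<psi> \<tau>. \<tau> \<in> {-1,1::real} \<and> n1 = EE e1 e2 \<psi> \<and>
     (\<forall>\<phi>. cos \<phi> *\<^sub>R n1 + sin \<phi> *\<^sub>R (\<sigma> *\<^sub>R cross3 v n1) = EE e1 e2 (\<psi> + \<tau> * \<phi>))"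
proof -
  note fp = frame_props[OF fr]
  have dec: "n1 = (n1 \<bullet> e1) *\<^sub>R e1 + (n1 \<bullet> e2) *\<^sub>R e2"
    by (rule frame_decomp[OF fr]) (use n1 in \<open>simp add: inner_commute\<close>)
  have "n1 \<bullet> n1 = 1" using n1 by (simp add: norm_eq_1)
  then have "(n1 \<bullet> e1)^2 + (n1 \<bullet> e2)^2 = 1"
    using fp by (subst (asm) dec, subst (asm) dec) (simp add: inner_add_left inner_add_right power2_eq_square)
  then obtain \<psi> where ps: "n1 \<bullet> e1 = cos \<psi>" "n1 \<bullet> e2 = sin \<psi>" using sincos_total_2pi by metis
  have n1e: "n1 = EE e1 e2 \<psi>" unfolding EE_def using dec ps by simp
  obtain s where s: "s \<in> {-1,1::real}" "cross3 v e1 = s *\<^sub>R e2" "cross3 v e2 = - s *\<^sub>R e1"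
    using frame_cross[OF fr] by blast
  have cr: "cross3 v n1 = (s * cos \<psi>) *\<^sub>R e2 - (s * sin \<psi>) *\<^sub>R e1"
    unfolding n1e EE_def by (simp add: cross_add_right cross_mult_right s mult.commute)
  define \<tau> where "\<tau> = \<sigma> * s"
  have tau: "\<tau> \<in> {-1,1}" using s sg unfolding \<tau>_def by auto
  have key: "cos \<phi> *\<^sub>R n1 + sin \<phi> *\<^sub>R (\<sigma> *\<^sub>R cross3 v n1) =
      (cos \<phi> * cos \<psi> - \<sigma> * s * sin \<phi> * sin \<psi>) *\<^sub>R e1 + (cos \<phi> * sin \<psi> + \<sigma> * s * sin \<phi> * cos \<psi>) *\<^sub>R e2" for \<phi>
    unfolding cr unfolding n1e EE_def by (simp add: algebra_simps scaleR_add_right)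
  have "cos \<phi> *\<^sub>R n1 + sin \<phi> *\<^sub>R (\<sigma> *\<^sub>R cross3 v n1) = EE e1 e2 (\<psi> + \<tau> * \<phi>)" for \<phi>
  proof (cases "\<tau> = 1")
    case True
    then have "\<sigma> * s = 1" unfolding \<tau>_def by simp
    then show ?thesis unfolding key EE_def using True
      by (simp add: cos_add sin_add algebra_simps)
  next
    case False
    then have t: "\<tau> = -1" using tau by auto
    then have "\<sigma> * s = -1" unfolding \<tau>_def by simp
    then show ?thesis unfolding key EE_def using t
      by (simp add: cos_diff sin_diff algebra_simps)
  qed
  then show ?thesis using tau n1e by blast
qed

lemma sector_gen:
  assumes ia: "interior_angle T u v w th" and fr: "frame v e1 e2"
    and u: "norm u = 1" "u \<noteq> v" "u \<noteq> - v"
  shows "\<exists>lo. {EE e1 e2 lo, EE e1 e2 (lo + th)} = {tangent_dir v u, tangent_dir v w} \<and>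
             sector T v e1 e2 lo th"
proof -
  note fp = frame_props[OF fr]
  from ia obtain \<sigma> where s: "\<sigma> \<in> {-1, 1::real}" and th: "0 < th" "th < 2*pi" and
    main: "let n1 = tangent_dir v u;
            n2 = \<sigma> *\<^sub>R cross3 v n1;
            dir = (\<lambda>\<phi>. cos \<phi> *\<^sub>R n1 + sin \<phi> *\<^sub>R n2)
        in tangent_dir v w = dir th \<and>
           (\<exists>e>0. \<forall>r. 0 < r \<and> r < e \<longrightarrow>
               (\<forall>\<phi>. 0 < \<phi> \<and> \<phi> < 2 * pi \<and> \<phi> \<noteq> th \<longrightarrow>
                  (cos r *\<^sub>R v + sin r *\<^sub>R dir \<phi> \<in> T \<longleftrightarrow> \<phi> < th)))"
    unfolding interior_angle_def by blast
  define n1 where "n1 = tangent_dir v u"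
  define dir where "dir = (\<lambda>\<phi>. cos \<phi> *\<^sub>R n1 + sin \<phi> *\<^sub>R (\<sigma> *\<^sub>R cross3 v n1))"
  have m1: "tangent_dir v w = dir th" and
    m2: "\<exists>e>0. \<forall>r. 0 < r \<and> r < e \<longrightarrow>
               (\<forall>\<phi>. 0 < \<phi> \<and> \<phi> < 2 * pi \<and> \<phi> \<noteq> th \<longrightarrow>
                  (cos r *\<^sub>R v + sin r *\<^sub>R dir \<phi> \<in> T \<longleftrightarrow> \<phi> < th))"
    using main unfolding n1_def dir_def Let_def by auto
  obtain e where e: "e > 0" and eh: "\<And>r \<phi>. 0 < r \<Longrightarrow> r < e \<Longrightarrow> 0 < \<phi> \<Longrightarrow> \<phi> < th \<Longrightarrow>
        cos r *\<^sub>R v + sin r *\<^sub>R dir \<phi> \<in> T"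
    using m2 th by force
  have n1p: "norm n1 = 1" "v \<bullet> n1 = 0" unfolding n1_def using td_props[OF fp(11) u] by auto
  obtain \<psi> \<tau> where tau: "\<tau> \<in> {-1,1::real}" and n1e: "n1 = EE e1 e2 \<psi>" and
    dr: "\<And>\<phi>. dir \<phi> = EE e1 e2 (\<psi> + \<tau> * \<phi>)"
    using dir_rot[OF fr n1p s] unfolding dir_def by blast
  show ?thesis
  proof (cases "\<tau> = 1")
    case True
    have "{EE e1 e2 \<psi>, EE e1 e2 (\<psi> + th)} = {tangent_dir v u, tangent_dir v w}"
      using m1 dr[of th] True n1e n1_def by simp
    moreover have "sector T v e1 e2 \<psi> th"
      unfolding sector_def
    proof (intro exI[of _ e] conjI e allI impI)
      fix r \<phi> assume h: "0 < r \<and> r < e \<and> \<psi> < \<phi> \<and> \<phi> < \<psi> + th"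
      have "cos r *\<^sub>R v + sin r *\<^sub>R dir (\<phi> - \<psi>) \<in> T" using eh h by auto
      then show "pt v e1 e2 r \<phi> \<in> T" unfolding pt_def dr using True by simp
    qed
    ultimately show ?thesis by blast
  next
    case False
    then have t: "\<tau> = -1" using tau by auto
    have "{EE e1 e2 (\<psi> - th), EE e1 e2 (\<psi> - th + th)} = {tangent_dir v u, tangent_dir v w}"
      using m1 dr[of th] t n1e n1_def by auto
    moreover have "sector T v e1 e2 (\<psi> - th) th"
      unfolding sector_def
    proof (intro exI[of _ e] conjI e allI impI)
      fix r \<phi> assume h: "0 < r \<and> r < e \<and> \<psi> - th < \<phi> \<and> \<phi> < \<psi> - th + th"
      have "cos r *\<^sub>R v + sin r *\<^sub>R dir (\<psi> - \<phi>) \<in> T" using eh h by auto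
      then show "pt v e1 e2 r \<phi> \<in> T" unfolding pt_def dr using t by simp
    qed
    ultimately show ?thesis by blast
  qed
qed

lemma sector_own:
  assumes ia: "interior_angle T u v w th" and v: "norm v = 1"
    and u: "norm u = 1" "u \<noteq> v" "u \<noteq> - v"
  shows "\<exists>e2. frame v (tangent_dir v u) e2 \<and> EE (tangent_dir v u) e2 0 = tangent_dir v u \<and>
     EE (tangent_dir v u) e2 th = tangent_dir v w \<and> sector T v (tangent_dir v u) e2 0 th"
proof -
  from ia obtain \<sigma> where s: "\<sigma> \<in> {-1, 1::real}" and th: "0 < th" "th < 2*pi" and
    main: "let n1 = tangent_dir v u;
            n2 = \<sigma> *\<^sub>R cross3 v n1;
            dir = (\<lambda>\<phi>. cos \<phi> *\<^sub>R n1 + sin \<phi> *\<^sub>R n2)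
        in tangent_dir v w = dir th \<and>
           (\<exists>e>0. \<forall>r. 0 < r \<and> r < e \<longrightarrow>
               (\<forall>\<phi>. 0 < \<phi> \<and> \<phi> < 2 * pi \<and> \<phi> \<noteq> th \<longrightarrow>
                  (cos r *\<^sub>R v + sin r *\<^sub>R dir \<phi> \<in> T \<longleftrightarrow> \<phi> < th)))"
    unfolding interior_angle_def by blast
  define n1 where "n1 = tangent_dir v u"
  define e2 where "e2 = \<sigma> *\<^sub>R cross3 v n1"
  have m1: "tangent_dir v w = EE n1 e2 th" and
    m2: "\<exists>e>0. \<forall>r. 0 < r \<and> r < e \<longrightarrow>
               (\<forall>\<phi>. 0 < \<phi> \<and> \<phi> < 2 * pi \<and> \<phi> \<noteq> th \<longrightarrow>
                  (cos r *\<^sub>R v + sin r *\<^sub>R EE n1 e2 \<phi> \<in> T \<longleftrightarrow> \<phi> < th))"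
    using main unfolding n1_def e2_def Let_def EE_def by auto
  have n1p: "norm n1 = 1" "v \<bullet> n1 = 0" unfolding n1_def using td_props[OF v u] by auto
  have fr: "frame v n1 e2" unfolding frame_def e2_def using v n1p s by blast
  obtain e where e: "e > 0" and eh: "\<And>r \<phi>. 0 < r \<Longrightarrow> r < e \<Longrightarrow> 0 < \<phi> \<Longrightarrow> \<phi> < th \<Longrightarrow>
        cos r *\<^sub>R v + sin r *\<^sub>R EE n1 e2 \<phi> \<in> T"
    using m2 th by force
  have "sector T v n1 e2 0 th" unfolding sector_def pt_def using e eh by auto
  moreover have "EE n1 e2 0 = n1" unfolding EE_def by simp
  ultimately show ?thesis using fr m1 unfolding n1_def by auto
qed




lemma pig:
  assumes "infinite A" "finite B" "\<forall>x\<in>A. \<exists>y\<in>B. Q x y"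
  shows "\<exists>x1\<in>A. \<exists>x2\<in>A. x1 \<noteq> x2 \<and> (\<exists>y\<in>B. Q x1 y \<and> Q x2 y)"
proof -
  define f where "f x = (SOME y. y \<in> B \<and> Q x y)" for x
  have f: "f x \<in> B \<and> Q x (f x)" if "x \<in> A" for x
    unfolding f_def using assms(3) that by (metis (mono_tags, lifting) someI_ex)
  have "\<not> inj_on f A"
  proof
    assume "inj_on f A"
    moreover have "f ` A \<subseteq> B" using f by auto
    ultimately have "finite A" using inj_on_finite assms(2) by blast
    then show False using assms(1) by simp
  qed
  then obtain x1 x2 where "x1 \<in> A" "x2 \<in> A" "x1 \<noteq> x2" "f x1 = f x2" unfolding inj_on_def by blast
  then show ?thesis using f[of x1] f[of x2] by auto
qed

lemma two_zero:
  fixes x y r1 r2 :: real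
  assumes "cos r1 * x + sin r1 * y = 0" "cos r2 * x + sin r2 * y = 0" "sin (r2 - r1) \<noteq> 0"
  shows "x = 0 \<and> y = 0"
proof -
  have "x * sin (r2 - r1) = sin r2 * (cos r1 * x + sin r1 * y) - sin r1 * (cos r2 * x + sin r2 * y)"
    by (simp add: sin_diff algebra_simps)
  then have "x * sin (r2 - r1) = 0" using assms by simp
  moreover have "y * sin (r2 - r1) = cos r1 * (cos r2 * x + sin r2 * y) - cos r2 * (cos r1 * x + sin r1 * y)"
    by (simp add: sin_diff algebra_simps)
  then have "y * sin (r2 - r1) = 0" using assms by simp
  ultimately show ?thesis using assms(3) by simp
qed

lemma sin_nz: fixes x y :: real
  assumes "x \<noteq> y" "\<bar>x - y\<bar> < pi" shows "sin (x - y) \<noteq> 0"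
proof (cases "x > y")
  case True then show ?thesis using sin_gt_zero[of "x - y"] assms by auto
next
  case False
  then have "y > x" using assms by auto
  then have "sin (y - x) > 0" using sin_gt_zero[of "y - x"] assms by auto
  moreover have "sin (x - y) = - sin (y - x)" by (metis minus_diff_eq sin_minus)
  ultimately show ?thesis by simp
qed

lemma patch:
  assumes fr: "frame v e1 e2" and Ns: "finite Ns" "0 \<notin> Ns" and ep: "\<epsilon> > 0" and ab: "a < b"
    and H: "\<forall>r \<phi>. 0 < r \<and> r < \<epsilon> \<and> a < \<phi> \<and> \<phi> < b \<longrightarrow> (\<exists>N\<in>Ns. pt v e1 e2 r \<phi> \<bullet> N = 0)"
  shows False
proof -
  note fp = frame_props[OF fr]
  have pti: "pt v e1 e2 r \<phi> \<bullet> N = cos r * (v \<bullet> N) + sin r * (EE e1 e2 \<phi> \<bullet> N)" for r \<phi> N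
    unfolding pt_def by (simp add: inner_add_left)
  have EEi: "EE e1 e2 \<phi> \<bullet> N = cos \<phi> * (e1 \<bullet> N) + sin \<phi> * (e2 \<bullet> N)" for \<phi> N
    unfolding EE_def by (simp add: inner_add_left)
  define b' where "b' = min b (a + pi/2)"
  have ab': "a < b'" using ab pi_gt_zero unfolding b'_def by auto
  have step1: "\<forall>\<phi>\<in>{a<..<b'}. \<exists>N\<in>Ns. v \<bullet> N = 0 \<and> EE e1 e2 \<phi> \<bullet> N = 0"
  proof
    fix \<phi> assume ph: "\<phi> \<in> {a<..<b'}"
    define e' where "e' = min \<epsilon> (pi/2)"
    have e': "0 < e'" using ep pi_gt_zero unfolding e'_def by auto
    have "\<forall>r\<in>{0<..<e'}. \<exists>N\<in>Ns. pt v e1 e2 r \<phi> \<bullet> N = 0"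
      using H ph unfolding e'_def b'_def by auto
    then have "\<exists>r1\<in>{0<..<e'}. \<exists>r2\<in>{0<..<e'}. r1 \<noteq> r2 \<and> (\<exists>N\<in>Ns. pt v e1 e2 r1 \<phi> \<bullet> N = 0 \<and> pt v e1 e2 r2 \<phi> \<bullet> N = 0)"
      by (intro pig) (use e' Ns in auto)
    then obtain r1 r2 N where r: "r1 \<in> {0<..<e'}" "r2 \<in> {0<..<e'}" "r1 \<noteq> r2" "N \<in> Ns"
      "pt v e1 e2 r1 \<phi> \<bullet> N = 0" "pt v e1 e2 r2 \<phi> \<bullet> N = 0" by blast
    have "\<bar>r2 - r1\<bar> < pi" using r unfolding e'_def by auto
    then have "sin (r2 - r1) \<noteq> 0" using sin_nz r by auto
    then have "v \<bullet> N = 0 \<and> EE e1 e2 \<phi> \<bullet> N = 0" using two_zero[of r1 "v \<bullet> N" "EE e1 e2 \<phi> \<bullet> N" r2] r(5,6) unfolding pti by blast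
    then show "\<exists>N\<in>Ns. v \<bullet> N = 0 \<and> EE e1 e2 \<phi> \<bullet> N = 0" using r by blast
  qed
  then have "\<exists>p1\<in>{a<..<b'}. \<exists>p2\<in>{a<..<b'}. p1 \<noteq> p2 \<and> (\<exists>N\<in>Ns. (v \<bullet> N = 0 \<and> EE e1 e2 p1 \<bullet> N = 0) \<and> (v \<bullet> N = 0 \<and> EE e1 e2 p2 \<bullet> N = 0))"
    by (intro pig) (use ab' Ns in auto)
  then obtain p1 p2 N where p: "p1 \<in> {a<..<b'}" "p2 \<in> {a<..<b'}" "p1 \<noteq> p2" "N \<in> Ns"
      "v \<bullet> N = 0" "EE e1 e2 p1 \<bullet> N = 0" "EE e1 e2 p2 \<bullet> N = 0" by blast
  have "\<bar>p2 - p1\<bar> < pi" using p pi_gt_zero unfolding b'_def by auto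
  then have "sin (p2 - p1) \<noteq> 0" using sin_nz p by auto
  then have "e1 \<bullet> N = 0 \<and> e2 \<bullet> N = 0" using two_zero[of p1 "e1 \<bullet> N" "e2 \<bullet> N" p2] p(6,7) unfolding EEi by blast
  then have "N = 0" using perp_zero[OF fr] p by (simp add: inner_commute)
  then show False using p Ns by simp
qed

lemma sarc_plane: "x \<in> sarc p q \<Longrightarrow> x \<bullet> cross3 p q = 0"
  unfolding sarc_def Let_def
  by (auto simp: inner_add_left dot_cross_self)

lemma curve_planes:
  assumes "\<forall>k<length vs. norm (vs ! k) = 1" "\<forall>k<length vs. vs ! (Suc k mod length vs) \<noteq> vs ! k"
    "\<forall>k<length vs. vs ! (Suc k mod length vs) \<noteq> - (vs ! k)"
  shows "\<exists>Ns. finite Ns \<and> 0 \<notin> Ns \<and> (\<forall>x\<in>poly_curve vs. \<exists>N\<in>Ns. x \<bullet> N = 0)"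
proof -
  define Ns where "Ns = (\<lambda>k. cross3 (vs ! k) (vs ! (Suc k mod length vs))) ` {..<length vs}"
  have "finite Ns" unfolding Ns_def by simp
  moreover have "0 \<notin> Ns"
  proof
    assume "0 \<in> Ns"
    then obtain k where k: "k < length vs" "cross3 (vs ! k) (vs ! (Suc k mod length vs)) = 0"
      unfolding Ns_def by auto
    have "0 < length vs" using k by (cases vs) auto
    then have "Suc k mod length vs < length vs" by simp
    then show False using cross_nz[of "vs ! k" "vs ! (Suc k mod length vs)"] k assms by metis
  qed
  moreover have "\<forall>x\<in>poly_curve vs. \<exists>N\<in>Ns. x \<bullet> N = 0"
    unfolding poly_curve_def poly_edge_def Ns_def using sarc_plane by blast
  ultimately show ?thesis by blast
qed

lemma sector_disj:
  assumes fr: "frame v e1 e2" and TT: "T \<inter> T' \<subseteq> poly_curve vs"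
    and vs: "\<forall>k<length vs. norm (vs ! k) = 1" "\<forall>k<length vs. vs ! (Suc k mod length vs) \<noteq> vs ! k"
    "\<forall>k<length vs. vs ! (Suc k mod length vs) \<noteq> - (vs ! k)"
    and s1: "sector T v e1 e2 lo th" and s2: "sector T' v e1 e2 lo' th'"
    and ov: "max lo lo' < min (lo + th) (lo' + th')"
  shows False
proof -
  obtain Ns where Ns: "finite Ns" "0 \<notin> Ns" "\<forall>x\<in>poly_curve vs. \<exists>N\<in>Ns. x \<bullet> N = 0"
    using curve_planes[OF vs] by blast
  obtain e where e: "e > 0" "\<forall>r \<phi>. 0 < r \<and> r < e \<and> lo < \<phi> \<and> \<phi> < lo + th \<longrightarrow> pt v e1 e2 r \<phi> \<in> T"
    using s1 unfolding sector_def by blast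
  obtain e' where e': "e' > 0" "\<forall>r \<phi>. 0 < r \<and> r < e' \<and> lo' < \<phi> \<and> \<phi> < lo' + th' \<longrightarrow> pt v e1 e2 r \<phi> \<in> T'"
    using s2 unfolding sector_def by blast
  show False
  proof (rule patch[OF fr Ns(1,2), of "min e e'" "max lo lo'" "min (lo + th) (lo' + th')"])
    show "0 < min e e'" using e e' by simp
    show "max lo lo' < min (lo + th) (lo' + th')" by (rule ov)
    show "\<forall>r \<phi>. 0 < r \<and> r < min e e' \<and> max lo lo' < \<phi> \<and> \<phi> < min (lo + th) (lo' + th') \<longrightarrow>
        (\<exists>N\<in>Ns. pt v e1 e2 r \<phi> \<bullet> N = 0)"
    proof (intro allI impI)
      fix r \<phi> assume h: "0 < r \<and> r < min e e' \<and> max lo lo' < \<phi> \<and> \<phi> < min (lo + th) (lo' + th')"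
      then have "pt v e1 e2 r \<phi> \<in> T \<inter> T'" using e e' by auto
      then show "\<exists>N\<in>Ns. pt v e1 e2 r \<phi> \<bullet> N = 0" using TT Ns by blast
    qed
  qed
qed

lemma sector_shift:
  assumes "sector T v e1 e2 lo th"
  shows "sector T v e1 e2 (lo + 2*pi*real_of_int n) th"
proof -
  have "pt v e1 e2 r (\<phi> - 2*pi*real_of_int n) = pt v e1 e2 r \<phi>" for r \<phi>
    using EE_periodic[of e1 e2 "\<phi> - 2*pi*real_of_int n" n] unfolding pt_def by simp
  moreover obtain e where e: "e > 0" "\<forall>r \<phi>. 0 < r \<and> r < e \<and> lo < \<phi> \<and> \<phi> < lo + th \<longrightarrow> pt v e1 e2 r \<phi> \<in> T"
    using assms unfolding sector_def by blast
  ultimately show ?thesis unfolding sector_def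
  proof (intro exI[of _ e] conjI allI impI)
    fix r \<phi> assume h: "0 < r \<and> r < e \<and> lo + 2 * pi * real_of_int n < \<phi> \<and> \<phi> < lo + 2 * pi * real_of_int n + th"
    have "pt v e1 e2 r (\<phi> - 2*pi*real_of_int n) \<in> T" using e h by auto
    then show "pt v e1 e2 r \<phi> \<in> T" using \<open>\<And>r \<phi>. pt v e1 e2 r (\<phi> - 2*pi*real_of_int n) = pt v e1 e2 r \<phi>\<close> by simp
  qed (use e in auto)
qed




definition ang :: "nat \<Rightarrow> real" where
  "ang k = [pi, 2*pi/3, pi/2, 2*pi/3, pi/2] ! k"
definition len :: "real \<Rightarrow> real \<Rightarrow> nat \<Rightarrow> real" where
  "len a b k = [a, a, b, a, a] ! k"
definition prv :: "nat \<Rightarrow> nat" where "prv k = (k + 4) mod 5"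
definition nxt :: "nat \<Rightarrow> nat" where "nxt k = (k + 1) mod 5"

lemma k5: "k < (5::nat) \<Longrightarrow> k = 0 \<or> k = 1 \<or> k = 2 \<or> k = 3 \<or> k = 4" by auto

lemma prv_nxt[simp]: "k < 5 \<Longrightarrow> prv (nxt k) = k" "k < 5 \<Longrightarrow> nxt (prv k) = k"
  "prv k < 5" "nxt k < 5"
  unfolding prv_def nxt_def using k5[of k] by auto

lemma nxt_ne: "k < 5 \<Longrightarrow> nxt k \<noteq> k" "k < 5 \<Longrightarrow> prv k \<noteq> k" "k < 5 \<Longrightarrow> prv k \<noteq> nxt k"
  unfolding prv_def nxt_def using k5[of k] by auto

lemma ang_vals: "k < 5 \<Longrightarrow> ang k = pi \<or> ang k = 2*pi/3 \<or> ang k = pi/2"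
  unfolding ang_def using k5 by fastforce

lemma ang_pos: assumes "k < 5" shows "pi/2 \<le> ang k \<and> ang k \<le> pi"
  using ang_vals[OF assms] pi_gt_zero by (elim disjE; linarith)

lemma ang_simps: "ang 0 = pi" "ang 1 = 2*pi/3" "ang 2 = pi/2" "ang 3 = 2*pi/3" "ang 4 = pi/2"
  unfolding ang_def by auto

lemma pn_simps: "prv 0 = 4" "nxt 0 = 1" "prv 1 = 0" "nxt 1 = 2" "prv 2 = 1" "nxt 2 = 3" "prv 3 = 2" "nxt 3 = 4" "prv 4 = 3" "nxt 4 = 0"
  unfolding prv_def nxt_def by auto

lemma ang_pi: "k < 5 \<Longrightarrow> ang k = pi \<Longrightarrow> k = 0"
  unfolding ang_def using k5 pi_gt_zero by fastforce

lemma ang_half: "k < 5 \<Longrightarrow> ang k = pi/2 \<Longrightarrow> k = 2 \<or> k = 4"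
  unfolding ang_def using k5 pi_gt_zero by fastforce

lemma sdist_sym: "sdist p q = sdist q p"
  unfolding sdist_def by (simp add: inner_commute)

definition isnb :: "(nat \<Rightarrow> (real^3) list) \<Rightarrow> nat \<Rightarrow> real^3 \<Rightarrow> real^3 \<Rightarrow> bool" where
  "isnb V j v u \<longleftrightarrow> (\<exists>l<5. V j ! l = v \<and> (u = V j ! prv l \<or> u = V j ! nxt l))"

locale T12 =
  fixes P :: "nat \<Rightarrow> (real^3) set" and V :: "nat \<Rightarrow> (real^3) list"
    and A B C D E :: "real^3" and a b :: real and g :: "nat \<Rightarrow> real^3 \<Rightarrow> real^3"
  assumes til: "edge_to_edge_tiling 12 P V"
    and V0: "V 0 = [A, B, D, E, C]"
    and pent: "a4b_pentagon (P 0) A B C D E a b pi (2 * pi / 3) (pi / 2) (pi / 2) (2 * pi / 3)"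
    and gi: "\<And>i. i < 12 \<Longrightarrow> orthogonal_transformation (g i) \<and> P i = g i ` P 0 \<and> V i = map (g i) (V 0)"
begin

lemma lenV: "i < 12 \<Longrightarrow> length (V i) = 5"
  using gi[of i] V0 by simp

lemma nthV: assumes "i < 12" "k < 5" shows "V i ! k = g i ([A, B, D, E, C] ! k)"
proof -
  have "V i = map (g i) [A, B, D, E, C]" using gi[OF assms(1)] V0 by simp
  then show ?thesis using k5[OF assms(2)] by (elim disjE) simp_all
qed

lemma polyV: "i < 12 \<Longrightarrow> spherical_polygon (P i) (V i)"
  using til unfolding edge_to_edge_tiling_def by blast

lemma polyV': assumes "i < 12"
  shows "set (V i) \<subseteq> sphere 0 1" "distinct (V i)" "\<And>k. k < 5 \<Longrightarrow> V i ! nxt k \<noteq> - (V i ! k)"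
  using polyV[OF assms] lenV[OF assms] unfolding spherical_polygon_def Let_def nxt_def by auto

lemma unitV: "i < 12 \<Longrightarrow> k < 5 \<Longrightarrow> norm (V i ! k) = 1"
  using polyV'(1)[of i] lenV[of i] by (metis mem_sphere_0 nth_mem subsetD)

lemma roleU: "i < 12 \<Longrightarrow> k < 5 \<Longrightarrow> l < 5 \<Longrightarrow> V i ! k = V i ! l \<Longrightarrow> k = l"
  using polyV'(2)[of i] lenV[of i] by (simp add: nth_eq_iff_index_eq)

lemma nbprops: assumes "i < 12" "k < 5"
  shows "V i ! nxt k \<noteq> V i ! k" "V i ! nxt k \<noteq> - (V i ! k)"
        "V i ! prv k \<noteq> V i ! k" "V i ! prv k \<noteq> - (V i ! k)"
proof -
  show "V i ! nxt k \<noteq> V i ! k" using roleU[OF assms(1) _ assms(2)] nxt_ne(1)[OF assms(2)] by fastforce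
  show "V i ! prv k \<noteq> V i ! k" using roleU[OF assms(1) _ assms(2)] nxt_ne(2)[OF assms(2)] by fastforce
  show "V i ! nxt k \<noteq> - (V i ! k)" using polyV'(3)[OF assms] .
  have "V i ! nxt (prv k) \<noteq> - (V i ! prv k)" using polyV'(3)[OF assms(1), of "prv k"] by simp
  then have "V i ! k \<noteq> - (V i ! prv k)" using assms by simp
  then show "V i ! prv k \<noteq> - (V i ! k)" by (metis minus_minus)
qed

lemma iaV: assumes "i < 12" "k < 5"
  shows "interior_angle (P i) (V i ! prv k) (V i ! k) (V i ! nxt k) (ang k)"
proof -
  have og: "orthogonal_transformation (g i)" and Pi: "P i = g i ` P 0" using gi[OF assms(1)] by auto
  have ia: "interior_angle (P 0) C A B pi" "interior_angle (P 0) A B D (2*pi/3)"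
    "interior_angle (P 0) B D E (pi/2)" "interior_angle (P 0) D E C (2*pi/3)"
    "interior_angle (P 0) E C A (pi/2)"
    using pent unfolding a4b_pentagon_def by auto
  have v: "V i ! 0 = g i A" "V i ! 1 = g i B" "V i ! 2 = g i D" "V i ! 3 = g i E" "V i ! 4 = g i C"
    using nthV[OF assms(1)] by auto
  have "k = 0 \<or> k = 1 \<or> k = 2 \<or> k = 3 \<or> k = 4" using assms(2) by auto
  then show ?thesis
  proof (elim disjE)
    assume k: "k = 0" show ?thesis unfolding k Pi pn_simps v ang_simps by (rule ot_ia[OF og ia(1)])
  next
    assume k: "k = 1" show ?thesis unfolding k Pi pn_simps v ang_simps by (rule ot_ia[OF og ia(2)])
  next
    assume k: "k = 2" show ?thesis unfolding k Pi pn_simps v ang_simps by (rule ot_ia[OF og ia(3)])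
  next
    assume k: "k = 3" show ?thesis unfolding k Pi pn_simps v ang_simps by (rule ot_ia[OF og ia(4)])
  next
    assume k: "k = 4" show ?thesis unfolding k Pi pn_simps v ang_simps by (rule ot_ia[OF og ia(5)])
  qed
qed

lemma sdV: assumes "i < 12" "k < 5"
  shows "sdist (V i ! k) (V i ! nxt k) = len a b k"
proof -
  have og: "orthogonal_transformation (g i)" using gi[OF assms(1)] by auto
  have sd: "sdist A B = a" "sdist B D = a" "sdist D E = b" "sdist E C = a" "sdist C A = a"
    using pent unfolding a4b_pentagon_def by auto
  have "k = 0 \<or> k = 1 \<or> k = 2 \<or> k = 3 \<or> k = 4" using assms(2) by auto
  moreover have "V i ! 0 = g i A" "V i ! 1 = g i B" "V i ! 2 = g i D" "V i ! 3 = g i E" "V i ! 4 = g i C"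
    using nthV[OF assms(1)] by auto
  moreover have "nxt 0 = 1" "nxt 1 = 2" "nxt 2 = 3" "nxt 3 = 4" "nxt 4 = 0"
    unfolding nxt_def by auto
  moreover have "len a b 0 = a" "len a b 1 = a" "len a b 2 = b" "len a b 3 = a" "len a b 4 = a"
    unfolding len_def by auto
  ultimately show ?thesis using sd
    by (elim disjE) (simp_all add: ot_sdist[OF og])
qed

lemma ab: "b \<noteq> a" using pent unfolding a4b_pentagon_def by auto

lemma sdV': assumes "i < 12" "k < 5"
  shows "sdist (V i ! k) (V i ! prv k) = len a b (prv k)"
  using sdV[OF assms(1) prv_nxt(3)[of k]] assms by (simp add: sdist_sym)

lemma start_in_sarc: "p \<in> sphere 0 1 \<Longrightarrow> p \<in> sarc p q"
  unfolding sarc_def Let_def by (rule image_eqI[of _ _ 0]) auto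

lemma end_in_sarc: "q \<in> sphere 0 1 \<Longrightarrow> q \<in> sarc p q"
  unfolding sarc_def Let_def by (rule image_eqI[of _ _ 1]) auto

lemma pairshare: assumes "i < 12" "k < 5"
  shows "\<exists>j<12. j \<noteq> i \<and> (\<exists>l<5. {V j ! l, V j ! nxt l} = {V i ! k, V i ! nxt k})"
proof -
  have e: "\<forall>i<12. \<forall>k<length (V i). \<exists>j<12. j \<noteq> i \<and>
         (\<exists>l<length (V j). poly_edge (V i) k = poly_edge (V j) l)" and
    vt: "\<forall>i<12. \<forall>j<12. \<forall>k<length (V i). \<forall>v \<in> set (V j).
         v \<in> poly_edge (V i) k \<longrightarrow> v = V i ! k \<or> v = V i ! (Suc k mod length (V i))"
    using til unfolding edge_to_edge_tiling_def by blast+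
  have kl: "k < length (V i)" using lenV assms by simp
  obtain j where j: "j < 12" "j \<noteq> i" "\<exists>l<length (V j). poly_edge (V i) k = poly_edge (V j) l"
    using e assms(1) kl by blast
  obtain l where jl: "j < 12" "j \<noteq> i" "l < 5" "poly_edge (V i) k = poly_edge (V j) l"
    using j lenV[OF j(1)] by auto
  have pe: "poly_edge (V j) l = sarc (V j ! l) (V j ! nxt l)"
    unfolding poly_edge_def using lenV[OF jl(1)] nxt_def by simp
  have pi': "poly_edge (V i) k = sarc (V i ! k) (V i ! nxt k)"
    unfolding poly_edge_def using lenV[OF assms(1)] nxt_def by simp
  have s1: "V j ! l \<in> set (V j)" "V j ! nxt l \<in> set (V j)" using lenV[OF jl(1)] jl(3) by auto
  have u1: "V j ! l \<in> sphere 0 1" "V j ! nxt l \<in> sphere 0 1" using unitV jl by auto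
  have "V j ! l \<in> poly_edge (V i) k" "V j ! nxt l \<in> poly_edge (V i) k"
    unfolding jl(4) pe using start_in_sarc end_in_sarc u1 by auto
  moreover have "Suc k mod length (V i) = nxt k" using lenV[OF assms(1)] unfolding nxt_def by simp
  ultimately have m: "V j ! l \<in> {V i ! k, V i ! nxt k}" "V j ! nxt l \<in> {V i ! k, V i ! nxt k}"
    using vt[rule_format, OF assms(1) jl(1) kl s1(1)] vt[rule_format, OF assms(1) jl(1) kl s1(2)] by auto
  have "V j ! nxt l \<noteq> V j ! l" using nbprops[OF jl(1,3)] by simp
  then have "{V j ! l, V j ! nxt l} = {V i ! k, V i ! nxt k}" using m by auto
  then show ?thesis using jl by blast
qed

lemma share: assumes "i < 12" "k < 5" "u = V i ! prv k \<or> u = V i ! nxt k"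
  shows "\<exists>j<12. j \<noteq> i \<and> isnb V j (V i ! k) u"
proof (cases "u = V i ! nxt k")
  case True
  obtain j l where jl: "j < 12" "j \<noteq> i" "l < 5" "{V j ! l, V j ! nxt l} = {V i ! k, V i ! nxt k}"
    using pairshare[OF assms(1,2)] by blast
  have ne: "V i ! nxt k \<noteq> V i ! k" using nbprops[OF assms(1,2)] by simp
  then have "(V j ! l = V i ! k \<and> V j ! nxt l = V i ! nxt k) \<or> (V j ! l = V i ! nxt k \<and> V j ! nxt l = V i ! k)"
    using jl(4) by (metis doubleton_eq_iff)
  then show ?thesis
  proof
    assume h: "V j ! l = V i ! k \<and> V j ! nxt l = V i ! nxt k"
    then have "isnb V j (V i ! k) u" unfolding isnb_def using jl(3) True by metis
    then show ?thesis using jl by blast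
  next
    assume h: "V j ! l = V i ! nxt k \<and> V j ! nxt l = V i ! k"
    then have "isnb V j (V i ! k) u" unfolding isnb_def using jl(3) True
      by (metis prv_nxt(1) prv_nxt(4))
    then show ?thesis using jl by blast
  qed
next
  case False
  then have u: "u = V i ! prv k" using assms(3) by blast
  obtain j l where jl: "j < 12" "j \<noteq> i" "l < 5" "{V j ! l, V j ! nxt l} = {V i ! prv k, V i ! nxt (prv k)}"
    using pairshare[OF assms(1) prv_nxt(3)] by blast
  have e: "V i ! nxt (prv k) = V i ! k" using assms by simp
  have ne: "V i ! prv k \<noteq> V i ! k" using nbprops[OF assms(1,2)] by simp
  then have "(V j ! l = V i ! prv k \<and> V j ! nxt l = V i ! k) \<or> (V j ! l = V i ! k \<and> V j ! nxt l = V i ! prv k)"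
    using jl(4) e by (metis doubleton_eq_iff)
  then show ?thesis
  proof
    assume h: "V j ! l = V i ! prv k \<and> V j ! nxt l = V i ! k"
    then have "isnb V j (V i ! k) u" unfolding isnb_def using jl(3) u
      by (metis prv_nxt(1) prv_nxt(4))
    then show ?thesis using jl by blast
  next
    assume h: "V j ! l = V i ! k \<and> V j ! nxt l = V i ! prv k"
    then have "isnb V j (V i ! k) u" unfolding isnb_def using jl(3) u by metis
    then show ?thesis using jl by blast
  qed
qed

lemma intV: "i < 12 \<Longrightarrow> j < 12 \<Longrightarrow> i \<noteq> j \<Longrightarrow> P i \<inter> P j \<subseteq> poly_curve (V i)"
  using til unfolding edge_to_edge_tiling_def by blast

lemma curve_hyps: assumes "i < 12"
  shows "\<forall>k<length (V i). norm (V i ! k) = 1" "\<forall>k<length (V i). V i ! (Suc k mod length (V i)) \<noteq> V i ! k"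
    "\<forall>k<length (V i). V i ! (Suc k mod length (V i)) \<noteq> - (V i ! k)"
  using unitV[OF assms] nbprops[OF assms] lenV[OF assms] unfolding nxt_def by auto

lemma DISJ: assumes "frame v e1 e2" "m < 12" "m' < 12" "m \<noteq> m'"
  "sector (P m) v e1 e2 lo th" "sector (P m') v e1 e2 lo' th'"
  shows "\<not> (max lo lo' < min (lo + th) (lo' + th'))"
  using sector_disj[OF assms(1) intV[OF assms(2,3,4)] curve_hyps[OF assms(2)] assms(5,6)] by blast

lemma degV: assumes "i < 12" "v \<in> set (V i)"
  shows "\<exists>j1 j2. j1 < 12 \<and> j2 < 12 \<and> j1 \<noteq> i \<and> j2 \<noteq> i \<and> j1 \<noteq> j2 \<and> v \<in> set (V j1) \<and> v \<in> set (V j2)"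
proof -
  let ?S = "{j. j < 12 \<and> v \<in> set (V j)}"
  have c: "3 \<le> card ?S" using til assms unfolding edge_to_edge_tiling_def by blast
  have f: "finite ?S" by simp
  have "?S - {i} \<noteq> {}"
  proof
    assume "?S - {i} = {}" then have "?S \<subseteq> {i}" by blast
    then have "card ?S \<le> card {i}" by (intro card_mono) auto
    then have "card ?S \<le> 1" by simp
    then show False using c by simp
  qed
  then obtain j1 where j1: "j1 \<in> ?S" "j1 \<noteq> i" by blast
  have "?S - {i, j1} \<noteq> {}"
  proof
    assume "?S - {i, j1} = {}" then have "?S \<subseteq> {i, j1}" by blast
    then have "card ?S \<le> card {i, j1}" by (intro card_mono) auto
    also have "\<dots> \<le> 2" by (simp add: card_insert_le_m1)
    finally show False using c by simp
  qed
  then obtain j2 where j2: "j2 \<in> ?S" "j2 \<noteq> i" "j2 \<noteq> j1" by blast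
  show ?thesis using j1 j2 by blast
qed

end



lemma pair_other: "{X, Y} = {x, y} \<Longrightarrow> X \<noteq> Y \<Longrightarrow> x = X \<Longrightarrow> y = Y"
  by (metis doubleton_eq_iff)

lemma pair_other2: "{X, Y} = {x, y} \<Longrightarrow> X \<noteq> Y \<Longrightarrow> y = X \<Longrightarrow> x = Y"
  by (metis doubleton_eq_iff)

context T12 begin

lemma LOC: assumes t: "t < 12" and k0: "k0 < 5"
  shows "\<exists>e1 e2. frame (V t ! k0) e1 e2 \<and>
     EE e1 e2 0 = tangent_dir (V t ! k0) (V t ! prv k0) \<and>
     EE e1 e2 (ang k0) = tangent_dir (V t ! k0) (V t ! nxt k0) \<and>
     sector (P t) (V t ! k0) e1 e2 0 (ang k0) \<and>
     (\<forall>m k. m < 12 \<longrightarrow> m \<noteq> t \<longrightarrow> k < 5 \<longrightarrow> V m ! k = V t ! k0 \<longrightarrow>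
        (\<exists>lo. ang k0 \<le> lo \<and> lo + ang k \<le> 2 * pi \<and>
           {EE e1 e2 lo, EE e1 e2 (lo + ang k)} =
             {tangent_dir (V t ! k0) (V m ! prv k), tangent_dir (V t ! k0) (V m ! nxt k)} \<and>
           sector (P m) (V t ! k0) e1 e2 lo (ang k)))"
proof -
  define v where "v = V t ! k0"
  note nb = nbprops[OF t k0]
  obtain e2 where e2: "frame v (tangent_dir v (V t ! prv k0)) e2"
    "EE (tangent_dir v (V t ! prv k0)) e2 0 = tangent_dir v (V t ! prv k0)"
    "EE (tangent_dir v (V t ! prv k0)) e2 (ang k0) = tangent_dir v (V t ! nxt k0)"
    "sector (P t) v (tangent_dir v (V t ! prv k0)) e2 0 (ang k0)"
    using sector_own[OF iaV[OF t k0] unitV[OF t k0] unitV[OF t prv_nxt(3)] nb(3,4)]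
    unfolding v_def by blast
  define e1 where "e1 = tangent_dir v (V t ! prv k0)"
  have fr: "frame v e1 e2" using e2 unfolding e1_def by simp
  have th0: "pi/2 \<le> ang k0" "ang k0 \<le> pi" using ang_pos[OF k0] by auto
  have main: "\<exists>lo. ang k0 \<le> lo \<and> lo + ang k \<le> 2 * pi \<and>
           {EE e1 e2 lo, EE e1 e2 (lo + ang k)} =
             {tangent_dir v (V m ! prv k), tangent_dir v (V m ! nxt k)} \<and>
           sector (P m) v e1 e2 lo (ang k)"
    if m: "m < 12" "m \<noteq> t" "k < 5" "V m ! k = v" for m k
  proof -
    note nbm = nbprops[OF m(1,3)]
    have thk: "pi/2 \<le> ang k" "ang k \<le> pi" using ang_pos[OF m(3)] by auto
    obtain lo where lo: "{EE e1 e2 lo, EE e1 e2 (lo + ang k)} =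
             {tangent_dir v (V m ! prv k), tangent_dir v (V m ! nxt k)}" "sector (P m) v e1 e2 lo (ang k)"
      using sector_gen[OF iaV[OF m(1,3)] _ unitV[OF m(1) prv_nxt(3)] nbm(3,4)] fr m(4) by metis
    define n where "n = floor (lo / (2*pi))"
    have n1: "real_of_int n \<le> lo / (2*pi)" unfolding n_def by (rule of_int_floor_le)
    have n2: "lo / (2*pi) < real_of_int n + 1" unfolding n_def by (rule real_of_int_floor_add_one_gt)
    have p2: "0 < 2*pi" using pi_gt_zero by simp
    have l1: "2*pi*real_of_int n \<le> lo" using n1 p2 by (simp add: field_simps)
    have l2: "lo < 2*pi*real_of_int n + 2*pi" using n2 p2 by (simp add: field_simps)
    define lo1 where "lo1 = lo + 2*pi*real_of_int (-n)"
    have lo1r: "0 \<le> lo1" "lo1 < 2*pi" unfolding lo1_def using l1 l2 by auto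
    have s1: "sector (P m) v e1 e2 lo1 (ang k)" unfolding lo1_def by (rule sector_shift[OF lo(2)])
    have E1: "EE e1 e2 lo1 = EE e1 e2 lo" unfolding lo1_def by (rule EE_periodic)
    have E2: "EE e1 e2 (lo1 + ang k) = EE e1 e2 (lo + ang k)"
      unfolding lo1_def using EE_periodic[of e1 e2 "lo + ang k" "-n"] by (simp add: algebra_simps)
    have st: "sector (P t) v e1 e2 0 (ang k0)" using e2(4) unfolding e1_def .
    have a1: "ang k0 \<le> lo1"
    proof (rule ccontr)
      assume "\<not> ang k0 \<le> lo1"
      then have "max lo1 0 < min (lo1 + ang k) (0 + ang k0)" using lo1r thk by auto
      then show False using DISJ[OF fr m(1) t m(2) s1 st] by blast
    qed
    have a2: "lo1 + ang k \<le> 2*pi"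
    proof (rule ccontr)
      assume h: "\<not> lo1 + ang k \<le> 2*pi"
      have s2: "sector (P m) v e1 e2 (lo1 + 2*pi*real_of_int (-1)) (ang k)" by (rule sector_shift[OF s1])
      have "max (lo1 + 2*pi*real_of_int (-1)) 0 < min (lo1 + 2*pi*real_of_int (-1) + ang k) (0 + ang k0)"
        using lo1r h th0 pi_gt_zero by auto
      then show False using DISJ[OF fr m(1) t m(2) s2 st] by blast
    qed
    show ?thesis using a1 a2 s1 lo(1) E1 E2 by metis
  qed
  show ?thesis unfolding v_def[symmetric]
    using fr e2(2,3,4) main unfolding e1_def by blast
qed

lemma EEi: assumes "frame v e1 e2" "EE e1 e2 x = EE e1 e2 y"
  "0 \<le> x" "x \<le> 2*pi" "0 \<le> y" "y \<le> 2*pi" "x \<noteq> y" "x \<noteq> 0 \<or> y \<noteq> 2*pi" "x \<noteq> 2*pi \<or> y \<noteq> 0"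
  shows False
  using EE_inj[OF assms(1-6)] assms(7-9) by blast

end



lemma maxmin: fixes a b c d :: real
  shows "\<not> (max a b < min c d) \<Longrightarrow> c \<le> a \<or> d \<le> a \<or> c \<le> b \<or> d \<le> b"
  by (auto simp: max_def min_def split: if_splits)

lemma EEi1: assumes "frame v e1 e2" "EE e1 e2 x = EE e1 e2 y" "0 < x" "x < y" "y \<le> 2*pi"
  shows False using EE_inj[OF assms(1,2)] assms(3-5) by auto

lemma EEi2: assumes "frame v e1 e2" "EE e1 e2 x = EE e1 e2 y" "0 \<le> x" "x < y" "y < 2*pi"
  shows False using EE_inj[OF assms(1,2)] assms(3-5) by auto

lemma EEi1': assumes "frame v e1 e2" "EE e1 e2 y = EE e1 e2 x" "0 < x" "x < y" "y \<le> 2*pi"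
  shows False using EEi1[OF assms(1) assms(2)[symmetric] assms(3-5)] .

lemma EEi2': assumes "frame v e1 e2" "EE e1 e2 y = EE e1 e2 x" "0 \<le> x" "x < y" "y < 2*pi"
  shows False using EEi2[OF assms(1) assms(2)[symmetric] assms(3-5)] .

lemma pn1: "prv (Suc 0) = 0" "nxt (Suc 0) = 2" unfolding prv_def nxt_def by auto

lemma in2: "z \<in> {x, y} \<Longrightarrow> z = x \<or> z = y" by auto

context T12 begin

lemma nb_in_set: "m < 12 \<Longrightarrow> v \<in> set (V m) \<Longrightarrow> \<exists>k<5. V m ! k = v"
  using lenV[of m] by (metis in_set_conv_nth)

lemma NO_DD: assumes t: "t < 12" and q: "q < 12" "q \<noteq> t" and h: "V q ! 2 = V t ! 0" "V q ! 1 = V t ! 4"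
  shows False
proof -
  have pi0: "0 < pi" by (rule pi_gt_zero)
  define v where "v = V t ! 4"
  obtain e1 e2 where fr: "frame v e1 e2" and E0: "EE e1 e2 0 = tangent_dir v (V t ! 3)"
    and E1: "EE e1 e2 (pi/2) = tangent_dir v (V t ! 0)" and st: "sector (P t) v e1 e2 0 (pi/2)"
    and H: "\<And>m k. m < 12 \<Longrightarrow> m \<noteq> t \<Longrightarrow> k < 5 \<Longrightarrow> V m ! k = v \<Longrightarrow>
        (\<exists>lo. pi/2 \<le> lo \<and> lo + ang k \<le> 2 * pi \<and>
           {EE e1 e2 lo, EE e1 e2 (lo + ang k)} =
             {tangent_dir v (V m ! prv k), tangent_dir v (V m ! nxt k)} \<and>
           sector (P m) v e1 e2 lo (ang k))"
    using LOC[OF t, of 4] unfolding v_def[symmetric] pn_simps ang_simps by auto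
  obtain lq where lq: "pi/2 \<le> lq" "lq + 2*pi/3 \<le> 2*pi"
    "{EE e1 e2 lq, EE e1 e2 (lq + 2*pi/3)} = {tangent_dir v (V q ! 0), tangent_dir v (V q ! 2)}"
    "sector (P q) v e1 e2 lq (2*pi/3)"
    using H[OF q(1,2), of 1] h(2) unfolding v_def[symmetric] pn_simps ang_simps by auto
  have tq2: "tangent_dir v (V q ! 2) = EE e1 e2 (pi/2)" using E1 h(1) by simp
  have lqv: "lq = pi/2"
  proof -
    have "EE e1 e2 (pi/2) \<in> {EE e1 e2 lq, EE e1 e2 (lq + 2*pi/3)}" using lq(3) tq2 by auto
    then show ?thesis
    proof (elim in2[elim_format] disjE)
      assume a: "EE e1 e2 (pi/2) = EE e1 e2 lq"
      show ?thesis
      proof (rule ccontr)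
        assume ne: "lq \<noteq> pi/2" have lt: "pi/2 < lq" using ne lq by linarith
        show False by (rule EEi1[OF fr a]) (use pi0 lq lt in linarith)+
      qed
    next
      assume a: "EE e1 e2 (pi/2) = EE e1 e2 (lq + 2*pi/3)"
      show ?thesis by (rule ccontr, rule EEi1[OF fr a]) (use pi0 lq in linarith)+
    qed
  qed
  have ne1: "EE e1 e2 (pi/2) \<noteq> EE e1 e2 (7*pi/6)"
  proof
    assume a: "EE e1 e2 (pi/2) = EE e1 e2 (7*pi/6)"
    show False by (rule EEi1[OF fr a]) (use pi0 in linarith)+
  qed
  have tq0: "tangent_dir v (V q ! 0) = EE e1 e2 (7*pi/6)"
  proof -
    have "lq + 2*pi/3 = 7*pi/6" using lqv by simp
    then have "{EE e1 e2 (pi/2), EE e1 e2 (7*pi/6)} = {tangent_dir v (V q ! 0), tangent_dir v (V q ! 2)}"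
      using lq(3) lqv by simp
    then show ?thesis using pair_other2[OF _ ne1] tq2 by metis
  qed
  have "\<exists>j<12. j \<noteq> t \<and> isnb V j (V t ! 4) (V t ! 3)" by (rule share[OF t]) (simp_all add: pn_simps)
  then obtain m where m: "m < 12" "m \<noteq> t" "isnb V m v (V t ! 3)" unfolding v_def by blast
  obtain km where km: "km < 5" "V m ! km = v" "V t ! 3 = V m ! prv km \<or> V t ! 3 = V m ! nxt km"
    using m(3) unfolding isnb_def by blast
  obtain lm where lm: "pi/2 \<le> lm" "lm + ang km \<le> 2*pi"
    "{EE e1 e2 lm, EE e1 e2 (lm + ang km)} = {tangent_dir v (V m ! prv km), tangent_dir v (V m ! nxt km)}"
    "sector (P m) v e1 e2 lm (ang km)"
    using H[OF m(1,2) km(1,2)] by blast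
  have thK: "pi/2 \<le> ang km" "ang km \<le> pi" using ang_pos[OF km(1)] by auto
  have lmv: "lm + ang km = 2*pi"
  proof -
    have x: "tangent_dir v (V t ! 3) \<in> {tangent_dir v (V m ! prv km), tangent_dir v (V m ! nxt km)}"
      using km(3) by (elim disjE) simp_all
    have "EE e1 e2 0 \<in> {EE e1 e2 lm, EE e1 e2 (lm + ang km)}" unfolding lm(3) E0 by (rule x)
    then show ?thesis
    proof (elim in2[elim_format] disjE)
      assume a: "EE e1 e2 0 = EE e1 e2 lm"
      show ?thesis by (rule ccontr, rule EEi2[OF fr a]) (use pi0 lm thK in linarith)+
    next
      assume a: "EE e1 e2 0 = EE e1 e2 (lm + ang km)"
      show ?thesis
      proof (rule ccontr)
        assume ne: "lm + ang km \<noteq> 2*pi" have lt: "lm + ang km < 2*pi" using ne lm by linarith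
        show False by (rule EEi2[OF fr a]) (use pi0 lm thK lt in linarith)+
      qed
    qed
  qed
  have "\<exists>j<12. j \<noteq> q \<and> isnb V j (V q ! 1) (V q ! 0)" by (rule share[OF q(1)]) (unfold pn_simps, simp_all)
  then obtain m' where m': "m' < 12" "m' \<noteq> q" "isnb V m' v (V q ! 0)" unfolding v_def h(2) by blast
  obtain km' where km': "km' < 5" "V m' ! km' = v" "V q ! 0 = V m' ! prv km' \<or> V q ! 0 = V m' ! nxt km'"
    using m'(3) unfolding isnb_def by blast
  have thKp: "pi/2 \<le> ang km'" "ang km' \<le> pi" using ang_pos[OF km'(1)] by auto
  have m't: "m' \<noteq> t"
  proof
    assume mt: "m' = t"
    then have "km' = 4" using roleU[OF t km'(1), of 4] km'(2) unfolding v_def by simp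
    then have "V q ! 0 = V t ! 3 \<or> V q ! 0 = V t ! 0" using km'(3) mt by (simp add: pn_simps)
    then have "tangent_dir v (V q ! 0) = tangent_dir v (V t ! 3) \<or> tangent_dir v (V q ! 0) = tangent_dir v (V t ! 0)"
      by (elim disjE) simp_all
    then have "EE e1 e2 (7*pi/6) = EE e1 e2 0 \<or> EE e1 e2 (7*pi/6) = EE e1 e2 (pi/2)"
      unfolding tq0 E0[symmetric] E1[symmetric] .
    then show False
    proof
      assume a: "EE e1 e2 (7*pi/6) = EE e1 e2 0"
      show False by (rule EEi2'[OF fr a]) (use pi0 in linarith)+
    next
      assume a: "EE e1 e2 (7*pi/6) = EE e1 e2 (pi/2)"
      show False by (rule EEi2'[OF fr a]) (use pi0 in linarith)+
    qed
  qed
  obtain lm' where lm': "pi/2 \<le> lm'" "lm' + ang km' \<le> 2*pi"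
    "{EE e1 e2 lm', EE e1 e2 (lm' + ang km')} = {tangent_dir v (V m' ! prv km'), tangent_dir v (V m' ! nxt km')}"
    "sector (P m') v e1 e2 lm' (ang km')"
    using H[OF m'(1) m't km'(1,2)] by blast
  have "\<not> (max lm' lq < min (lm' + ang km') (lq + 2*pi/3))"
    using DISJ[OF fr m'(1) q(1) m'(2) lm'(4) lq(4)] .
  then have lm'a: "7*pi/6 \<le> lm'" using lqv thKp pi0 lm'(1) by (elim maxmin[elim_format] disjE) linarith+
  have lm'v: "lm' = 7*pi/6"
  proof -
    have x: "tangent_dir v (V q ! 0) \<in> {tangent_dir v (V m' ! prv km'), tangent_dir v (V m' ! nxt km')}"
      using km'(3) by (elim disjE) simp_all
    have "EE e1 e2 (7*pi/6) \<in> {EE e1 e2 lm', EE e1 e2 (lm' + ang km')}" unfolding lm'(3) tq0[symmetric] by (rule x)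
    then show ?thesis
    proof (elim in2[elim_format] disjE)
      assume a: "EE e1 e2 (7*pi/6) = EE e1 e2 lm'"
      show ?thesis
      proof (rule ccontr)
        assume ne: "lm' \<noteq> 7*pi/6" have lt: "7*pi/6 < lm'" using ne lm'a by linarith
        show False by (rule EEi1[OF fr a]) (use pi0 lm' thKp lt in linarith)+
      qed
    next
      assume a: "EE e1 e2 (7*pi/6) = EE e1 e2 (lm' + ang km')"
      show ?thesis by (rule ccontr, rule EEi1[OF fr a]) (use pi0 lm' lm'a thKp in linarith)+
    qed
  qed
  have mq: "m \<noteq> q"
  proof
    assume mq: "m = q"
    then have "km = 1" using roleU[OF q(1) km(1), of 1] km(2) h(2) unfolding v_def by simp
    then have "V t ! 3 = V q ! 0 \<or> V t ! 3 = V q ! 2" using km(3) mq by (simp add: pn_simps pn1)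
    then have "tangent_dir v (V t ! 3) = tangent_dir v (V q ! 0) \<or> tangent_dir v (V t ! 3) = tangent_dir v (V q ! 2)"
      by (elim disjE) simp_all
    then have "EE e1 e2 0 = EE e1 e2 (7*pi/6) \<or> EE e1 e2 0 = EE e1 e2 (pi/2)"
      unfolding tq0 tq2 E0[symmetric] .
    then show False
    proof
      assume a: "EE e1 e2 0 = EE e1 e2 (7*pi/6)"
      show False by (rule EEi2[OF fr a]) (use pi0 in linarith)+
    next
      assume a: "EE e1 e2 0 = EE e1 e2 (pi/2)"
      show False by (rule EEi2[OF fr a]) (use pi0 in linarith)+
    qed
  qed
  show False
  proof (cases "m = m'")
    case True
    then have "km = km'" using roleU[OF m(1) km(1) km'(1)] km(2) km'(2) by simp
    then have "{EE e1 e2 lm, EE e1 e2 (lm + ang km)} = {EE e1 e2 lm', EE e1 e2 (lm' + ang km)}"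
      using lm(3) lm'(3) True by simp
    then have "EE e1 e2 (lm + ang km) \<in> {EE e1 e2 lm', EE e1 e2 (lm' + ang km)}" by blast
    then show False
    proof (elim in2[elim_format] disjE)
      assume a: "EE e1 e2 (lm + ang km) = EE e1 e2 lm'"
      show False by (rule EEi1'[OF fr a]) (use pi0 lmv lm'v in linarith)+
    next
      assume a: "EE e1 e2 (lm + ang km) = EE e1 e2 (lm' + ang km)"
      have "ang km \<noteq> 5*pi/6"
      proof
        assume a5: "ang km = 5*pi/6"
        show False using ang_vals[OF km(1)] by (elim disjE) (use a5 pi0 in linarith)+
      qed
      then have "lm' + ang km \<noteq> 2*pi" using lm'v by auto
      have lt: "lm' + ang km < 2*pi" using lm'(2) \<open>km = km'\<close> \<open>lm' + ang km \<noteq> 2*pi\<close> by auto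
      show False by (rule EEi1'[OF fr a]) (use pi0 lmv lm'v thK lt in linarith)+
    qed
  next
    case False
    have "\<not> (max lm lm' < min (lm + ang km) (lm' + ang km'))"
      using DISJ[OF fr m(1) m'(1) False lm(4) lm'(4)] .
    then show False using lmv lm'v thK thKp pi0 by (elim maxmin[elim_format] disjE) linarith+
  qed
qed

end



context T12 begin

lemma AT_A: assumes t: "t < 12"
  shows "\<exists>p q. p < 12 \<and> q < 12 \<and> p \<noteq> q \<and> V p ! 4 = V t ! 0 \<and> V q ! 4 = V t ! 0 \<and>
     (\<forall>m<12. m \<noteq> t \<longrightarrow> V m ! 0 \<noteq> V t ! 0)"
proof -
  have pi0: "0 < pi" by (rule pi_gt_zero)
  define v where "v = V t ! 0"
  obtain e1 e2 where fr: "frame v e1 e2" and E0: "EE e1 e2 0 = tangent_dir v (V t ! 4)"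
    and E1: "EE e1 e2 pi = tangent_dir v (V t ! 1)" and st: "sector (P t) v e1 e2 0 pi"
    and H: "\<And>m k. m < 12 \<Longrightarrow> m \<noteq> t \<Longrightarrow> k < 5 \<Longrightarrow> V m ! k = v \<Longrightarrow>
        (\<exists>lo. pi \<le> lo \<and> lo + ang k \<le> 2 * pi \<and>
           {EE e1 e2 lo, EE e1 e2 (lo + ang k)} =
             {tangent_dir v (V m ! prv k), tangent_dir v (V m ! nxt k)} \<and>
           sector (P m) v e1 e2 lo (ang k))"
    using LOC[OF t, of 0] unfolding v_def[symmetric] pn_simps ang_simps by auto
  have E2pi: "EE e1 e2 (2*pi) = EE e1 e2 0" using EE_periodic[of e1 e2 0 1] by simp
  have "\<exists>j<12. j \<noteq> t \<and> isnb V j (V t ! 0) (V t ! 1)" by (rule share[OF t]) (unfold pn_simps, simp_all)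
  then obtain p where p: "p < 12" "p \<noteq> t" "isnb V p v (V t ! 1)" unfolding v_def by blast
  obtain kp where kp: "kp < 5" "V p ! kp = v" "V t ! 1 = V p ! prv kp \<or> V t ! 1 = V p ! nxt kp"
    using p(3) unfolding isnb_def by blast
  obtain lp where lp: "pi \<le> lp" "lp + ang kp \<le> 2*pi"
    "{EE e1 e2 lp, EE e1 e2 (lp + ang kp)} = {tangent_dir v (V p ! prv kp), tangent_dir v (V p ! nxt kp)}"
    "sector (P p) v e1 e2 lp (ang kp)"
    using H[OF p(1,2) kp(1,2)] by blast
  have thp: "pi/2 \<le> ang kp" "ang kp \<le> pi" using ang_pos[OF kp(1)] by auto
  have lpv: "lp = pi"
  proof -
    have x: "tangent_dir v (V t ! 1) \<in> {tangent_dir v (V p ! prv kp), tangent_dir v (V p ! nxt kp)}"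
      using kp(3) by (elim disjE) simp_all
    have "EE e1 e2 pi \<in> {EE e1 e2 lp, EE e1 e2 (lp + ang kp)}" unfolding lp(3) E1 by (rule x)
    then show ?thesis
    proof (elim in2[elim_format] disjE)
      assume a: "EE e1 e2 pi = EE e1 e2 lp"
      show ?thesis
      proof (rule ccontr)
        assume ne: "lp \<noteq> pi" have lt: "pi < lp" using ne lp by linarith
        show False by (rule EEi1[OF fr a]) (use pi0 lp thp lt in linarith)+
      qed
    next
      assume a: "EE e1 e2 pi = EE e1 e2 (lp + ang kp)"
      show ?thesis by (rule ccontr, rule EEi1[OF fr a]) (use pi0 lp thp in linarith)+
    qed
  qed
  have "\<exists>j<12. j \<noteq> t \<and> isnb V j (V t ! 0) (V t ! 4)" by (rule share[OF t]) (unfold pn_simps, simp_all)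
  then obtain q where q: "q < 12" "q \<noteq> t" "isnb V q v (V t ! 4)" unfolding v_def by blast
  obtain kq where kq: "kq < 5" "V q ! kq = v" "V t ! 4 = V q ! prv kq \<or> V t ! 4 = V q ! nxt kq"
    using q(3) unfolding isnb_def by blast
  obtain lq where lq: "pi \<le> lq" "lq + ang kq \<le> 2*pi"
    "{EE e1 e2 lq, EE e1 e2 (lq + ang kq)} = {tangent_dir v (V q ! prv kq), tangent_dir v (V q ! nxt kq)}"
    "sector (P q) v e1 e2 lq (ang kq)"
    using H[OF q(1,2) kq(1,2)] by blast
  have thq: "pi/2 \<le> ang kq" "ang kq \<le> pi" using ang_pos[OF kq(1)] by auto
  have lqv: "lq + ang kq = 2*pi"
  proof -
    have x: "tangent_dir v (V t ! 4) \<in> {tangent_dir v (V q ! prv kq), tangent_dir v (V q ! nxt kq)}"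
      using kq(3) by (elim disjE) simp_all
    have "EE e1 e2 0 \<in> {EE e1 e2 lq, EE e1 e2 (lq + ang kq)}" unfolding lq(3) E0 by (rule x)
    then show ?thesis
    proof (elim in2[elim_format] disjE)
      assume a: "EE e1 e2 0 = EE e1 e2 lq"
      show ?thesis by (rule ccontr, rule EEi2[OF fr a]) (use pi0 lq thq in linarith)+
    next
      assume a: "EE e1 e2 0 = EE e1 e2 (lq + ang kq)"
      show ?thesis
      proof (rule ccontr)
        assume ne: "lq + ang kq \<noteq> 2*pi" have lt: "lq + ang kq < 2*pi" using ne lq by linarith
        show False by (rule EEi2[OF fr a]) (use pi0 lq thq lt in linarith)+
      qed
    qed
  qed
  have vin: "v \<in> set (V t)" unfolding v_def using lenV[OF t] by simp
  have pq: "p \<noteq> q"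
  proof
    assume pq: "p = q"
    then have kk: "kp = kq" using roleU[OF p(1) kp(1) kq(1)] kp(2) kq(2) by simp
    have "{EE e1 e2 lp, EE e1 e2 (lp + ang kp)} = {EE e1 e2 lq, EE e1 e2 (lq + ang kp)}"
      using lp(3) lq(3) pq kk by simp
    then have "EE e1 e2 pi \<in> {EE e1 e2 lq, EE e1 e2 (lq + ang kq)}" using lpv kk by blast
    then have th: "ang kp = pi"
    proof (elim in2[elim_format] disjE)
      assume a: "EE e1 e2 pi = EE e1 e2 lq"
      have "lq = pi"
      proof (rule ccontr)
        assume ne: "lq \<noteq> pi" have lt: "pi < lq" using ne lq by linarith
        show False by (rule EEi1[OF fr a]) (use pi0 lq thq lt in linarith)+
      qed
      then show ?thesis using lqv kk by simp
    next
      assume a: "EE e1 e2 pi = EE e1 e2 (lq + ang kq)"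
      show ?thesis by (rule ccontr, rule EEi1[OF fr a]) (use pi0 lq thq lqv in linarith)+
    qed
    obtain j1 j2 where j: "j1 < 12" "j2 < 12" "j1 \<noteq> t" "j2 \<noteq> t" "j1 \<noteq> j2" "v \<in> set (V j1)" "v \<in> set (V j2)"
      using degV[OF t vin] by blast
    obtain r where r: "r < 12" "r \<noteq> t" "r \<noteq> p" "v \<in> set (V r)"
      using j by (cases "j1 = p") auto
    obtain kr where kr: "kr < 5" "V r ! kr = v" using nb_in_set[OF r(1,4)] by blast
    obtain lr where lr: "pi \<le> lr" "lr + ang kr \<le> 2*pi" "sector (P r) v e1 e2 lr (ang kr)"
      using H[OF r(1,2) kr] by blast
    have thr: "pi/2 \<le> ang kr" "ang kr \<le> pi" using ang_pos[OF kr(1)] by auto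
    have "\<not> (max lr lp < min (lr + ang kr) (lp + ang kp))"
      using DISJ[OF fr r(1) p(1) r(3) lr(3) lp(4)] .
    then show False using lpv th thr lr pi0 by (elim maxmin[elim_format] disjE) linarith+
  qed
  have "\<not> (max lp lq < min (lp + ang kp) (lq + ang kq))"
    using DISJ[OF fr p(1) q(1) pq lp(4) lq(4)] .
  then have sum: "ang kp + ang kq \<le> pi" using lpv lqv thp thq lp lq pi0
    by (elim maxmin[elim_format] disjE) linarith+
  have hp: "ang kp = pi/2" and hq: "ang kq = pi/2" using sum thp thq by linarith+
  have kp24: "kp = 2 \<or> kp = 4" using ang_half[OF kp(1) hp] .
  have kq24: "kq = 2 \<or> kq = 4" using ang_half[OF kq(1) hq] .
  have lqv': "lq = 3*pi/2" using lqv hq by simp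
  have ne1: "EE e1 e2 pi \<noteq> EE e1 e2 (3*pi/2)"
  proof
    assume a: "EE e1 e2 pi = EE e1 e2 (3*pi/2)"
    show False by (rule EEi1[OF fr a]) (use pi0 in linarith)+
  qed
  have ne2: "EE e1 e2 (3*pi/2) \<noteq> EE e1 e2 0"
  proof
    assume a: "EE e1 e2 (3*pi/2) = EE e1 e2 0"
    show False by (rule EEi2'[OF fr a]) (use pi0 in linarith)+
  qed
  define yp where "yp = (if V t ! 1 = V p ! prv kp then V p ! nxt kp else V p ! prv kp)"
  have ypn: "yp = V p ! prv kp \<or> yp = V p ! nxt kp" unfolding yp_def by simp
  have bp: "{EE e1 e2 pi, EE e1 e2 (3*pi/2)} = {tangent_dir v (V p ! prv kp), tangent_dir v (V p ! nxt kp)}"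
  proof -
    have e: "lp + ang kp = 3*pi/2" using lpv hp by simp
    show ?thesis unfolding e[symmetric] using lp(3) lpv by simp
  qed
  have tyP: "tangent_dir v yp = EE e1 e2 (3*pi/2)"
  proof (cases "V t ! 1 = V p ! prv kp")
    case True
    then have "tangent_dir v (V p ! prv kp) = EE e1 e2 pi" using E1 by simp
    then have "tangent_dir v (V p ! nxt kp) = EE e1 e2 (3*pi/2)" using pair_other[OF bp ne1] by metis
    then show ?thesis unfolding yp_def using True by simp
  next
    case False
    then have "V t ! 1 = V p ! nxt kp" using kp(3) by blast
    then have "tangent_dir v (V p ! nxt kp) = EE e1 e2 pi" using E1 by simp
    then have "tangent_dir v (V p ! prv kp) = EE e1 e2 (3*pi/2)" using pair_other2[OF bp ne1] by metis
    then show ?thesis unfolding yp_def using False by simp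
  qed
  define yq where "yq = (if V t ! 4 = V q ! prv kq then V q ! nxt kq else V q ! prv kq)"
  have bq: "{EE e1 e2 (3*pi/2), EE e1 e2 0} = {tangent_dir v (V q ! prv kq), tangent_dir v (V q ! nxt kq)}"
    using lq(3) lqv lqv' E2pi by simp
  have "\<exists>j<12. j \<noteq> p \<and> isnb V j (V p ! kp) yp" by (rule share[OF p(1) kp(1) ypn])
  then obtain r where r: "r < 12" "r \<noteq> p" "isnb V r v yp" using kp(2) by auto
  obtain kr where kr: "kr < 5" "V r ! kr = v" "yp = V r ! prv kr \<or> yp = V r ! nxt kr"
    using r(3) unfolding isnb_def by blast
  have thr: "pi/2 \<le> ang kr" "ang kr \<le> pi" using ang_pos[OF kr(1)] by auto
  have rt: "r \<noteq> t"
  proof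
    assume rt: "r = t"
    then have "kr = 0" using roleU[OF t kr(1), of 0] kr(2) unfolding v_def by simp
    then have "yp = V t ! 4 \<or> yp = V t ! 1" using kr(3) rt by (simp add: pn_simps)
    then have "tangent_dir v yp = tangent_dir v (V t ! 4) \<or> tangent_dir v yp = tangent_dir v (V t ! 1)"
      by (elim disjE) simp_all
    then have "EE e1 e2 (3*pi/2) = EE e1 e2 0 \<or> EE e1 e2 (3*pi/2) = EE e1 e2 pi"
      unfolding tyP E0[symmetric] E1[symmetric] .
    then show False using ne1 ne2 by auto
  qed
  obtain lr where lr: "pi \<le> lr" "lr + ang kr \<le> 2*pi"
    "{EE e1 e2 lr, EE e1 e2 (lr + ang kr)} = {tangent_dir v (V r ! prv kr), tangent_dir v (V r ! nxt kr)}"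
    "sector (P r) v e1 e2 lr (ang kr)"
    using H[OF r(1) rt kr(1,2)] by blast
  have rq: "r = q"
  proof (rule ccontr)
    assume rq: "r \<noteq> q"
    have x: "tangent_dir v yp \<in> {tangent_dir v (V r ! prv kr), tangent_dir v (V r ! nxt kr)}"
      using kr(3) by (elim disjE) simp_all
    have "EE e1 e2 (3*pi/2) \<in> {EE e1 e2 lr, EE e1 e2 (lr + ang kr)}" unfolding lr(3) tyP[symmetric] by (rule x)
    then show False
    proof (elim in2[elim_format] disjE)
      assume a: "EE e1 e2 (3*pi/2) = EE e1 e2 lr"
      have "lr = 3*pi/2"
      proof (rule ccontr)
        assume ne: "lr \<noteq> 3*pi/2"
        show False
        proof (cases "lr < 3*pi/2")
          case True
          show False by (rule EEi1'[OF fr a]) (use pi0 lr thr True in linarith)+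
        next
          case False
          have lt: "3*pi/2 < lr" using False ne by linarith
          show False by (rule EEi1[OF fr a]) (use pi0 lr thr lt in linarith)+
        qed
      qed
      moreover have "\<not> (max lr lq < min (lr + ang kr) (lq + ang kq))"
        using DISJ[OF fr r(1) q(1) rq lr(4) lq(4)] .
      ultimately show False using lqv lqv' thr pi0 by (elim maxmin[elim_format] disjE) linarith+
    next
      assume a: "EE e1 e2 (3*pi/2) = EE e1 e2 (lr + ang kr)"
      have "lr + ang kr = 3*pi/2"
      proof (rule ccontr)
        assume ne: "lr + ang kr \<noteq> 3*pi/2"
        show False
        proof (cases "lr + ang kr < 3*pi/2")
          case True
          show False by (rule EEi1'[OF fr a]) (use pi0 lr thr True in linarith)+
        next
          case False
          have lt: "3*pi/2 < lr + ang kr" using False ne by linarith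
          show False by (rule EEi1[OF fr a]) (use pi0 lr thr lt in linarith)+
        qed
      qed
      moreover have "\<not> (max lr lp < min (lr + ang kr) (lp + ang kp))"
        using DISJ[OF fr r(1) p(1) r(2) lr(4) lp(4)] .
      ultimately show False using lpv hp thr lr pi0 by (elim maxmin[elim_format] disjE) linarith+
    qed
  qed
  have krq: "kr = kq" using roleU[OF q(1) kr(1) kq(1)] kr(2) kq(2) rq by simp
  have ypC: "yp \<noteq> V t ! 4"
  proof
    assume "yp = V t ! 4"
    then have "EE e1 e2 (3*pi/2) = EE e1 e2 0" using tyP E0 by simp
    then show False using ne2 by simp
  qed
  have ypq: "yp = yq"
    using kr(3) kq(3) ypC rq krq unfolding yq_def by auto
  have dB: "sdist v (V t ! 1) = a" using sdV[OF t, of 0] unfolding v_def pn_simps len_def by simp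
  have dC: "sdist v (V t ! 4) = a" using sdV'[OF t, of 0] unfolding v_def pn_simps len_def by simp
  have ab': "a \<noteq> b" using ab by simp
  have dp: "(kp = 4 \<longrightarrow> sdist v yp = a) \<and> (kp = 2 \<longrightarrow> sdist v yp = b)"
  proof -
    have s1: "sdist v (V p ! prv kp) = len a b (prv kp)" using sdV'[OF p(1) kp(1)] kp(2) by simp
    have s2: "sdist v (V p ! nxt kp) = len a b kp" using sdV[OF p(1) kp(1)] kp(2) by simp
    show ?thesis
    proof (intro conjI impI)
      assume k4: "kp = 4"
      have l3: "len a b (prv kp) = a" "len a b kp = a" using k4 by (simp_all add: pn_simps len_def)
      show "sdist v yp = a" using ypn s1 s2 l3 by auto
    next
      assume k2: "kp = 2"
      show "sdist v yp = b"
      proof (cases "V t ! 1 = V p ! prv kp")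
        case True
        then show ?thesis using s2 k2 unfolding yp_def len_def by simp
      next
        case False
        then have "V t ! 1 = V p ! nxt kp" using kp(3) by blast
        then have "a = b" using s2 dB k2 unfolding len_def by simp
        then show ?thesis using ab' by simp
      qed
    qed
  qed
  have dq: "(kq = 4 \<longrightarrow> sdist v yq = a) \<and> (kq = 2 \<longrightarrow> sdist v yq = b \<and> V t ! 4 = V q ! 1)"
  proof -
    have s1: "sdist v (V q ! prv kq) = len a b (prv kq)" using sdV'[OF q(1) kq(1)] kq(2) by simp
    have s2: "sdist v (V q ! nxt kq) = len a b kq" using sdV[OF q(1) kq(1)] kq(2) by simp
    have yqn: "yq = V q ! prv kq \<or> yq = V q ! nxt kq" unfolding yq_def by simp
    show ?thesis
    proof (intro conjI impI)
      assume k4: "kq = 4"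
      have l3: "len a b (prv kq) = a" "len a b kq = a" using k4 by (simp_all add: pn_simps len_def)
      show "sdist v yq = a" using yqn s1 s2 l3 by auto
    next
      assume k2: "kq = 2"
      have c: "V t ! 4 = V q ! prv kq"
      proof (rule ccontr)
        assume "V t ! 4 \<noteq> V q ! prv kq"
        then have "V t ! 4 = V q ! nxt kq" using kq(3) by blast
        then have "a = b" using s2 dC k2 unfolding len_def by simp
        then show False using ab' by simp
      qed
      then show "sdist v yq = b" using s2 k2 unfolding yq_def len_def by simp
      show "V t ! 4 = V q ! 1" using c k2 by (simp add: pn_simps)
    qed
  qed
  have kk: "kp = 4 \<and> kq = 4"
  proof -
    { assume "kp = 2" "kq = 4" then have False using dp dq ypq ab' by auto }
    moreover
    { assume "kp = 4" "kq = 2" then have False using dp dq ypq ab' by auto }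
    moreover
    { assume k2: "kp = 2" "kq = 2"
      then have "V t ! 4 = V q ! 1" using dq by blast
      moreover have "V q ! 2 = V t ! 0" using kq(2) k2 unfolding v_def by simp
      ultimately have False using NO_DD[OF t q(1) q(2)] by simp }
    ultimately show ?thesis using kp24 kq24 by blast
  qed
  have inj: "\<forall>m<12. m \<noteq> t \<longrightarrow> V m ! 0 \<noteq> v"
  proof (intro allI impI)
    fix m assume m: "m < 12" "m \<noteq> t"
    show "V m ! 0 \<noteq> v"
    proof
      assume mv: "V m ! 0 = v"
      have mp: "m \<noteq> p"
      proof
        assume "m = p" then have "V p ! 0 = V p ! 4" using mv kp(2) kk by simp
        then show False using roleU[OF p(1), of 0 4] by simp
      qed
      obtain lm where lm: "pi \<le> lm" "lm + ang 0 \<le> 2*pi" "sector (P m) v e1 e2 lm (ang 0)"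
        using H[OF m, of 0] mv by auto
      have "\<not> (max lm lp < min (lm + ang 0) (lp + ang kp))"
        using DISJ[OF fr m(1) p(1) mp lm(3) lp(4)] .
      then show False using lm lpv hp pi0 unfolding ang_simps by (elim maxmin[elim_format] disjE) linarith+
    qed
  qed
  show ?thesis using p(1) q(1) pq kk kp(2) kq(2) inj unfolding v_def by blast
qed

end



context T12 begin

lemma final: False
proof -
  define X where "X t = {p. p < 12 \<and> V p ! 4 = V t ! 0}" for t
  have c2: "2 \<le> card (X t)" if t: "t < 12" for t
  proof -
    obtain p q where pq: "p < 12" "q < 12" "p \<noteq> q" "V p ! 4 = V t ! 0" "V q ! 4 = V t ! 0"
      using AT_A[OF t] by blast
    have "{p, q} \<subseteq> X t" unfolding X_def using pq by auto
    moreover have "finite (X t)" unfolding X_def by simp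
    ultimately have "card {p, q} \<le> card (X t)" by (rule card_mono[rotated])
    then show ?thesis using pq(3) by simp
  qed
  have inj: "V t ! 0 \<noteq> V t' ! 0" if "t < 12" "t' < 12" "t \<noteq> t'" for t t'
  proof -
    have "\<forall>m<12. m \<noteq> t \<longrightarrow> V m ! 0 \<noteq> V t ! 0" using AT_A[OF that(1)] by blast
    then show ?thesis using that by auto
  qed
  have disj: "X t \<inter> X t' = {}" if "t \<in> {..<12}" "t' \<in> {..<12}" "t \<noteq> t'" for t t'
    using inj[of t t'] that unfolding X_def by auto
  have fin: "\<forall>t\<in>{..<12::nat}. finite (X t)" unfolding X_def by simp
  have "card (\<Union>t\<in>{..<12::nat}. X t) = (\<Sum>t\<in>{..<12::nat}. card (X t))"
    by (rule card_UN_disjoint) (use fin disj in auto)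
  also have "\<dots> \<ge> (\<Sum>t\<in>{..<12::nat}. 2)" by (rule sum_mono) (use c2 in auto)
  finally have ge: "24 \<le> card (\<Union>t\<in>{..<12::nat}. X t)" by simp
  have "(\<Union>t\<in>{..<12::nat}. X t) \<subseteq> {..<12}" unfolding X_def by auto
  then have "card (\<Union>t\<in>{..<12::nat}. X t) \<le> card {..<12::nat}" by (rule card_mono[OF finite_lessThan])
  then have "card (\<Union>t\<in>{..<12::nat}. X t) \<le> 12" by simp
  then show False using ge by simp
qed

end

theorem mainTheorem8:
  shows "\<not> (\<exists>(P :: nat \<Rightarrow> (real^3) set) V A B C D E a b.
            edge_to_edge_tiling 12 P V \<and>
            V 0 = [A, B, D, E, C] \<and>
            a4b_pentagon (P 0) A B C D E a b pi (2 * pi / 3) (pi / 2) (pi / 2) (2 * pi / 3) \<and>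
            (\<forall>i<12. \<exists>g. orthogonal_transformation g \<and> P i = g ` P 0 \<and> V i = map g (V 0)))"
proof
  assume "\<exists>(P :: nat \<Rightarrow> (real^3) set) V A B C D E a b.
            edge_to_edge_tiling 12 P V \<and>
            V 0 = [A, B, D, E, C] \<and>
            a4b_pentagon (P 0) A B C D E a b pi (2 * pi / 3) (pi / 2) (pi / 2) (2 * pi / 3) \<and>
            (\<forall>i<12. \<exists>g. orthogonal_transformation g \<and> P i = g ` P 0 \<and> V i = map g (V 0))"
  then show False
  proof (elim exE conjE)
    fix P :: "nat \<Rightarrow> (real^3) set" and V A B C D E a b
    assume h1: "edge_to_edge_tiling 12 P V" and h2: "V 0 = [A, B, D, E, C]"
      and h3: "a4b_pentagon (P 0) A B C D E a b pi (2 * pi / 3) (pi / 2) (pi / 2) (2 * pi / 3)"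
      and h4: "\<forall>i<12. \<exists>g. orthogonal_transformation g \<and> P i = g ` P 0 \<and> V i = map g (V 0)"
    have ex: "\<forall>i. \<exists>g. i < 12 \<longrightarrow> orthogonal_transformation g \<and> P i = g ` P 0 \<and> V i = map g (V 0)"
      using h4 by blast
    obtain G where G: "\<forall>i. i < 12 \<longrightarrow> orthogonal_transformation (G i) \<and> P i = G i ` P 0 \<and> V i = map (G i) (V 0)"
      using choice[OF ex] by blast
    interpret T12 P V A B C D E a b G
    proof
      show "edge_to_edge_tiling 12 P V" by (rule h1)
      show "V 0 = [A, B, D, E, C]" by (rule h2)
      show "a4b_pentagon (P 0) A B C D E a b pi (2 * pi / 3) (pi / 2) (pi / 2) (2 * pi / 3)" by (rule h3)
      fix i :: nat assume "i < 12"
      then show "orthogonal_transformation (G i) \<and> P i = G i ` P 0 \<and> V i = map (G i) (V 0)" using G by blast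
    qed
    show False by (rule final)
  qed
qed


end
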